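(* Let $f:\mathbb{R}^n\to\mathbb{R}$ be strongly convex with constant $\mu>0$, and assume there exist scalars $M_1,M_2>0$ such that $\|v\|\le M_1\|x\|+M_2$ for all $x\in\mathbb{R}^n$ and all $v\in\partial f(x)$. Let $f^*$ be the optimal value of $\min_{x\in X}f(x)$. Run the random incremental penalty method with $s_k=\frac{2}{\mu k}$, $\delta_k=\frac{1}{k^d}$ with $d>1$, and $\gamma_k=\ln^g k$ with $g>0$, for all $k$. Define $\bar x_t^{\mathrm{av}}=\bar S_t^{-1}\sum_{k=1}^t s_k^{-1}x_k$ with $\bar S_t=\sum_{k=1}^t s_k^{-1}$. Then, as $t\to\infty$, $$\big|\mathbb{E}[f(\bar x_t^{\mathrm{av}})]-f^*\big|=O\!\left(\frac{\ln^{2g}t}{t}\right).$$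
   Context: Let $a_1,\dots,a_m\in\mathbb{R}^n$ be nonzero vectors ($m\ge2$) and $b_1,\dots,b_m\in\mathbb{R}$. Let $X_i=\{x\in\mathbb{R}^n:\langle a_i,x\rangle-b_i\le0\}$ and $X=\bigcap_{i=1}^m X_i$, assumed nonempty. Strong convexity with constant $\mu$ means $f(u)\ge f(v)+\langle g,u-v\rangle+\frac{\mu}{2}\|u-v\|^2$ for all $u,v$ and all $g\in\partial f(v)$. For $\delta>0$, a nonzero $a\in\mathbb{R}^n$ and $b\in\mathbb{R}$, define $h_\delta(x;a,b)=\frac{\langle a,x\rangle-b}{\|a\|}$ if $\langle a,x\rangle-b>\delta$, $h_\delta(x;a,b)=\frac{(\langle a,x\rangle-b+\delta)^2}{4\delta\|a\|}$ if $-\delta\le\langle a,x\rangle-b\le\delta$, and $0$ if $\langle a,x\rangle-b<-\delta$; its gradient is $\nabla h_\delta(x;a,b)=\frac{1}{\|a\|}p'_\delta(\langle a,x\rangle-b)\,a$, where $p'_\delta(s)=1$ for $s>\delta$, $\frac{s+\delta}{2\delta}$ for $|s|\le\delta$, $0$ for $s<-\delta$. Random incremental penalty method: given sequences $\{s_k\},\{\gamma_k\},\{\delta_k\}$ and a random initial point $x_1$ with $\mathbb{E}\|x_1\|^2<\infty$, for $k\ge1$ set $x_{k+1}=x_k-s_k\big[\tilde\nabla f(x_k)+\gamma_k\nabla h_{\delta_k}(x_k;a_{i_k},b_{i_k})\big]$, where $\tilde\nabla f(x_k)\in\partial f(x_k)$ and $i_k$ is drawn uniformly at random from $\{1,\dots,m\}$,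 independently of $x_1,i_1,\dots,i_{k-1}$. *)

theory Defs
  imports "HOL-Probability.Probability" "HOL-Library.Landau_Symbols"
begin

definition subdifferential :: "('a::euclidean_space \<Rightarrow> real) \<Rightarrow> 'a \<Rightarrow> 'a set" where
  "subdifferential f x = {g. \<forall>y. f y \<ge> f x + inner g (y - x)}"

definition strongly_convex_const :: "('a::euclidean_space \<Rightarrow> real) \<Rightarrow> real \<Rightarrow> bool" where
  "strongly_convex_const f \<mu> \<longleftrightarrow>
     (\<forall>u v. \<forall>g\<in>subdifferential f v. f u \<ge> f v + inner g (u - v) + \<mu> / 2 * (norm (u - v))\<^sup>2)"

definition pdelta' :: "real \<Rightarrow> real \<Rightarrow> real" where
  "pdelta' \<delta> s = (if s > \<delta> then 1 else if s < - \<delta> then 0 else (s + \<delta>) / (2 * \<delta>))"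

definition hdelta :: "real \<Rightarrow> 'a::euclidean_space \<Rightarrow> 'a \<Rightarrow> real \<Rightarrow> real" where
  "hdelta \<delta> x a b =
     (let s = inner a x - b in
      if s > \<delta> then s / norm a
      else if s < - \<delta> then 0
      else (s + \<delta>)\<^sup>2 / (4 * \<delta> * norm a))"

definition hdelta_grad :: "real \<Rightarrow> 'a::euclidean_space \<Rightarrow> 'a \<Rightarrow> real \<Rightarrow> 'a" where
  "hdelta_grad \<delta> x a b = (pdelta' \<delta> (inner a x - b) / norm a) *\<^sub>R a"

end

theory Submission
  imports Defs "HOL-Analysis.Analysis"
begin

locale pen =
  fixes f :: "'a::euclidean_space \<Rightarrow> real" and sg :: "'a \<Rightarrow> 'a"
    and m :: nat and a :: "nat \<Rightarrow> 'a" and b :: "nat \<Rightarrow> real"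
    and \<mu> M1 M2 d g :: real and s \<gamma> \<delta> :: "nat \<Rightarrow> real"
  assumes m_pos: "m \<ge> 1"
    and a_nz: "\<And>j. j < m \<Longrightarrow> a j \<noteq> 0"
    and X_ne: "\<exists>y. \<forall>j<m. inner (a j) y - b j \<le> 0"
    and mu_pos: "\<mu> > 0"
    and sconv: "strongly_convex_const f \<mu>"
    and M1: "M1 > 0" and M2: "M2 > 0"
    and growth: "\<And>y v. v \<in> subdifferential f y \<Longrightarrow> norm v \<le> M1 * norm y + M2"
    and sg_sub: "\<And>y. sg y \<in> subdifferential f y"
    and s_def: "\<And>k. s k = 2 / (\<mu> * real k)"
    and d: "d > 1" and delta_def: "\<And>k. \<delta> k = 1 / real k powr d"
    and g: "g > 0" and gamma_def: "\<And>k. \<gamma> k = ln (real k) powr g"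
begin

definition feas :: "'a \<Rightarrow> bool" where "feas y \<longleftrightarrow> (\<forall>j<m. inner (a j) y - b j \<le> 0)"

definition Q :: "'a \<Rightarrow> real" where "Q x = (\<Sum>j<m. max 0 (inner (a j) x - b j))"

lemma le_1_sq: "(x::real) \<le> 1 + x\<^sup>2"
proof -
  have "0 \<le> (x - 1)\<^sup>2" by simp
  then have "x * 2 \<le> 1 + x * x" by (simp add: power2_eq_square algebra_simps)
  moreover have "0 \<le> x * x" by simp
  ultimately show ?thesis unfolding power2_eq_square by linarith
qed

lemma sub_ineq: "f u \<ge> f v + inner (sg v) (u - v) + \<mu> / 2 * (norm (u - v))\<^sup>2"
  using sconv sg_sub unfolding strongly_convex_const_def by blast

lemma sub_ineq': "f u \<ge> f v + inner (sg v) (u - v)"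
proof -
  have "0 \<le> \<mu> / 2 * (norm (u - v))\<^sup>2" using mu_pos by simp
  then show ?thesis using sub_ineq[of v u] by linarith
qed

lemma sg_norm: "norm (sg y) \<le> M1 * norm y + M2"
  using growth sg_sub by blast

lemma f_convex: "convex_on UNIV f"
proof (rule convex_onI)
  fix t :: real and x y :: 'a
  assume t: "0 < t" "t < 1"
  define z where "z = (1 - t) *\<^sub>R x + t *\<^sub>R y"
  have 1: "f x \<ge> f z + inner (sg z) (x - z)" by (rule sub_ineq')
  have 2: "f y \<ge> f z + inner (sg z) (y - z)" by (rule sub_ineq')
  have "(1 - t) * inner (sg z) (x - z) + t * inner (sg z) (y - z) = inner (sg z) ((1 - t) *\<^sub>R x + t *\<^sub>R y - z)"
    by (simp add: inner_diff_right inner_add_right algebra_simps)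
  also have "\<dots> = 0" by (simp add: z_def)
  finally have 3: "(1 - t) * inner (sg z) (x - z) + t * inner (sg z) (y - z) = 0" .
  have "(1 - t) * f x + t * f y \<ge> (1 - t) * (f z + inner (sg z) (x - z)) + t * (f z + inner (sg z) (y - z))"
    using 1 2 t by (intro add_mono mult_left_mono) auto
  then show "f ((1 - t) *\<^sub>R x + t *\<^sub>R y) \<le> (1 - t) * f x + t * f y"
    using 3 unfolding z_def[symmetric] by (simp add: algebra_simps)
qed auto

lemma f_cont: "continuous_on UNIV f"
  by (rule convex_on_continuous) (auto simp: f_convex)

lemma f_meas: "f \<in> borel_measurable borel"
  by (rule borel_measurable_continuous_onI[OF f_cont])

lemma f_upper: "f y \<le> f 0 + (M1 + M2) * (1 + (norm y)\<^sup>2)"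
proof -
  have "f 0 \<ge> f y + inner (sg y) (0 - y)" by (rule sub_ineq')
  hence "f y \<le> f 0 + inner (sg y) y" by (simp add: inner_minus_right)
  also have "inner (sg y) y \<le> norm (sg y) * norm y" by (rule norm_cauchy_schwarz)
  also have "\<dots> \<le> (M1 * norm y + M2) * norm y" by (rule mult_right_mono[OF sg_norm]) simp
  also have "\<dots> \<le> (M1 + M2) * (1 + (norm y)\<^sup>2)"
  proof -
    have "norm y \<le> 1 + (norm y)\<^sup>2" by (rule le_1_sq)
    then have "M2 * norm y \<le> M2 * (1 + (norm y)\<^sup>2)" using M2 by (intro mult_left_mono) auto
    moreover have "M1 * (norm y)\<^sup>2 \<le> M1 * (1 + (norm y)\<^sup>2)" using M1 by simp
    moreover have "M1 * (1 + (norm y)\<^sup>2) \<ge> 0" "M2 * (1 + (norm y)\<^sup>2) \<ge> 0" using M1 M2 by auto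
    ultimately show ?thesis by (simp add: algebra_simps power2_eq_square)
  qed
  finally show ?thesis by simp
qed

lemma f_lower: "f y \<ge> f 0 - norm (sg 0) * (1 + (norm y)\<^sup>2)"
proof -
  have "f y \<ge> f 0 + inner (sg 0) (y - 0)" by (rule sub_ineq')
  moreover have "inner (sg 0) y \<ge> - (norm (sg 0) * norm y)"
    using norm_cauchy_schwarz[of "sg 0" "-y"] by (simp add: inner_minus_right)
  moreover have "norm (sg 0) * norm y \<le> norm (sg 0) * (1 + (norm y)\<^sup>2)"
    using le_1_sq[of "norm y"] by (intro mult_left_mono) auto
  ultimately show ?thesis by simp
qed

lemma f_abs_bound: "\<exists>C\<ge>0. \<forall>y. \<bar>f y\<bar> \<le> C * (1 + (norm y)\<^sup>2)"
proof -
  define C where "C = \<bar>f 0\<bar> + M1 + M2 + norm (sg 0)"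
  have "\<bar>f y\<bar> \<le> C * (1 + (norm y)\<^sup>2)" for y
  proof -
    have h: "1 \<le> 1 + (norm y)\<^sup>2" by simp
    have "\<bar>f 0\<bar> \<le> \<bar>f 0\<bar> * (1 + (norm y)\<^sup>2)" using h by (simp add: mult_le_cancel_left1)
    have e: "C * (1 + (norm y)\<^sup>2) = \<bar>f 0\<bar> * (1 + (norm y)\<^sup>2) + (M1 + M2) * (1 + (norm y)\<^sup>2) + norm (sg 0) * (1 + (norm y)\<^sup>2)"
      unfolding C_def by (simp add: algebra_simps)
    have p1: "(M1 + M2) * (1 + (norm y)\<^sup>2) \<ge> 0" "norm (sg 0) * (1 + (norm y)\<^sup>2) \<ge> 0" using M1 M2 by auto
    have p2: "f 0 \<le> \<bar>f 0\<bar>" "- f 0 \<le> \<bar>f 0\<bar>" by auto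
    show ?thesis unfolding abs_le_iff using f_upper[of y] f_lower[of y] e \<open>\<bar>f 0\<bar> \<le> _\<close> p1 p2 by linarith
  qed
  moreover have "C \<ge> 0" using M1 M2 by (simp add: C_def)
  ultimately show ?thesis by blast
qed

end

lemma quad_bound:
  fixes r A B c :: real
  assumes "c > 0" "r \<ge> 0" "A \<ge> 0" "B \<ge> 0" "c * r\<^sup>2 \<le> A + B * r"
  shows "r \<le> max 1 ((A + B) / c)"
proof (cases "r \<le> 1")
  case False
  have "A \<le> A * r" using mult_left_mono[of 1 r A] False assms by simp
  then have "A + B * r \<le> (A + B) * r" by (simp add: distrib_right)
  with assms have "c * r * r \<le> (A + B) * r" by (simp add: power2_eq_square)
  then have "c * r \<le> A + B" using False by (simp add: mult_le_cancel_right)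
  then have "r \<le> (A + B) / c" using assms by (simp add: field_simps)
  then show ?thesis by simp
qed simp

context pen begin

lemma feas_closed: "closed {y. feas y}"
proof -
  have "{y. feas y} = (\<Inter>j\<in>{..<m}. {y. inner (a j) y \<le> b j})" by (auto simp: feas_def)
  then show ?thesis by (auto intro!: closed_INT closed_halfspace_le)
qed

lemma exists_min: "\<exists>z. feas z \<and> (\<forall>y. feas y \<longrightarrow> f z \<le> f y)"
proof -
  obtain y0 where y0: "feas y0" using X_ne feas_def by auto
  define S where "S = {y. feas y} \<inter> {y. f y \<le> f y0}"
  have "closed S" unfolding S_def
    by (intro closed_Int feas_closed closed_Collect_le f_cont continuous_on_const)
  moreover have "bounded S"
  proof -
    define R where "R = max 1 ((\<bar>f y0 - f 0\<bar> + norm (sg 0)) / (\<mu> / 2))"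
    have "norm y \<le> R" if "y \<in> S" for y
    proof -
      have "f y \<ge> f 0 + inner (sg 0) (y - 0) + \<mu> / 2 * (norm (y - 0))\<^sup>2" by (rule sub_ineq)
      moreover have "f y \<le> f y0" using that by (auto simp: S_def)
      moreover have "inner (sg 0) y \<ge> - (norm (sg 0) * norm y)"
        using norm_cauchy_schwarz[of "sg 0" "-y"] by (simp add: inner_minus_right)
      ultimately have "\<mu> / 2 * (norm y)\<^sup>2 \<le> \<bar>f y0 - f 0\<bar> + norm (sg 0) * norm y"
        using abs_ge_self[of "f y0 - f 0"] by simp
      then show ?thesis unfolding R_def using mu_pos by (intro quad_bound) auto
    qed
    then show ?thesis unfolding bounded_iff by blast
  qed
  ultimately have "compact S" by (simp add: compact_eq_bounded_closed)
  moreover have "S \<noteq> {}" using y0 by (auto simp: S_def)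
  moreover have "continuous_on S f" using f_cont by (rule continuous_on_subset) simp
  ultimately obtain z where z: "z \<in> S" "\<forall>y\<in>S. f z \<le> f y" using continuous_attains_inf by blast
  have "f z \<le> f y" if "feas y" for y
  proof (cases "f y \<le> f y0")
    case True then show ?thesis using z that by (auto simp: S_def)
  next
    case False then show ?thesis using z by (auto simp: S_def)
  qed
  then show ?thesis using z by (auto simp: S_def)
qed

definition xs where "xs = (SOME z. feas z \<and> (\<forall>y. feas y \<longrightarrow> f z \<le> f y))"

lemma xs_feas: "feas xs" and xs_min: "feas y \<Longrightarrow> f xs \<le> f y"
  using someI_ex[OF exists_min] unfolding xs_def[symmetric] by auto

lemma Inf_eq: "Inf {f y | y. \<forall>j<m. inner (a j) y - b j \<le> 0} = f xs"
  by (rule cInf_eq_minimum) (use xs_feas xs_min in \<open>auto simp: feas_def\<close>)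

lemma normal_vec: "\<exists>v. (\<forall>x. f x \<ge> f xs - inner v (x - xs)) \<and> (\<forall>y. feas y \<longrightarrow> inner v (y - xs) \<le> 0)"
proof -
  define S1 where "S1 = {p::'a\<times>real. f (fst p) \<le> snd p}"
  define T1 where "T1 = {p::'a\<times>real. feas (fst p) \<and> snd p < f xs}"
  have "S1 = epigraph UNIV f" by (auto simp: S1_def epigraph_def)
  then have cS1: "convex S1" using f_convex convex_epigraph by auto
  have cT1: "convex T1" unfolding convex_def
  proof (intro ballI allI impI)
    fix p q :: "'a \<times> real" and u v :: real
    assume p: "p \<in> T1" and q: "q \<in> T1" and uv: "0 \<le> u" "0 \<le> v" "u + v = 1"
    have "feas (u *\<^sub>R fst p + v *\<^sub>R fst q)" unfolding feas_def
    proof (intro allI impI)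
      fix j assume j: "j < m"
      have "inner (a j) (u *\<^sub>R fst p + v *\<^sub>R fst q) - b j
          = u * (inner (a j) (fst p) - b j) + v * (inner (a j) (fst q) - b j)"
      proof -
        have "u * (inner (a j) (fst p) - b j) + v * (inner (a j) (fst q) - b j)
           = inner (a j) (u *\<^sub>R fst p + v *\<^sub>R fst q) - (u + v) * b j"
          by (simp add: inner_add_right algebra_simps)
        then show ?thesis using uv(3) by simp
      qed
      also have "\<dots> \<le> 0" using p q j uv unfolding T1_def feas_def
        by (intro add_nonpos_nonpos mult_nonneg_nonpos) auto
      finally show "inner (a j) (u *\<^sub>R fst p + v *\<^sub>R fst q) - b j \<le> 0" .
    qed
    moreover have "u * snd p + v * snd q < f xs"
    proof (cases "u > 0")
      case True
      have "u * snd p < u * f xs" using p True by (auto simp: T1_def)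
      moreover have "v * snd q \<le> v * f xs" using q uv by (intro mult_left_mono) (auto simp: T1_def)
      moreover have "u * f xs + v * f xs = f xs" using uv(3) by (simp flip: distrib_right)
      ultimately show ?thesis by linarith
    next
      case False
      then have "u = 0" "v = 1" using uv by auto
      then show ?thesis using q by (auto simp: T1_def)
    qed
    ultimately show "u *\<^sub>R p + v *\<^sub>R q \<in> T1" by (auto simp: T1_def)
  qed
  have ne1: "S1 \<noteq> {}" by (auto simp: S1_def intro!: exI[of _ "(xs, f xs)"])
  have "(xs, f xs - 1) \<in> T1" using xs_feas by (simp add: T1_def)
  then have ne2: "T1 \<noteq> {}" by blast
  have dj: "S1 \<inter> T1 = {}"
  proof -
    have False if "p \<in> S1" "p \<in> T1" for p
      using that xs_min[of "fst p"] by (auto simp: S1_def T1_def)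
    then show ?thesis by blast
  qed
  obtain w0 c where w0: "w0 \<noteq> 0" "\<forall>p\<in>S1. inner w0 p \<le> c" "\<forall>p\<in>T1. inner w0 p \<ge> c"
    using separating_hyperplane_sets[OF cS1 cT1 ne1 ne2 dj] by blast
  obtain w \<beta> where wb: "w0 = (w, \<beta>)" by (cases w0)
  have S1': "inner w x + \<beta> * r \<le> c" if "f x \<le> r" for x r
    using w0(2) that wb by (auto simp: S1_def)
  have T1': "inner w y + \<beta> * r \<ge> c" if "feas y" "r < f xs" for y r
    using w0(3) that wb by (auto simp: T1_def)
  have bnp: "\<beta> \<le> 0"
  proof (rule ccontr)
    assume "\<not> \<beta> \<le> 0"
    then have bp: "\<beta> > 0" by simp
    define r where "r = max (f 0) ((c + 1) / \<beta>)"
    have "(c + 1) / \<beta> \<le> r" by (simp add: r_def)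
    then have "\<beta> * ((c + 1) / \<beta>) \<le> \<beta> * r" using bp by (intro mult_left_mono) auto
    then have "\<beta> * r \<ge> c + 1" using bp by simp
    moreover have "inner w 0 + \<beta> * r \<le> c" by (rule S1') (simp add: r_def)
    ultimately show False by simp
  qed
  have bnz: "\<beta> \<noteq> 0"
  proof
    assume b0: "\<beta> = 0"
    then have wnz: "w \<noteq> 0" using w0 wb by (auto simp: zero_prod_def)
    define x where "x = ((\<bar>c\<bar> + 1) / (norm w)\<^sup>2) *\<^sub>R w"
    have "inner w x = \<bar>c\<bar> + 1" using wnz
      by (simp add: x_def power2_norm_eq_inner[symmetric])
    moreover have "inner w x + \<beta> * f x \<le> c" by (rule S1') simp
    ultimately show False using b0 by simp
  qed
  with bnp have bneg: "\<beta> < 0" by simp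
  define v where "v = (1 / \<beta>) *\<^sub>R w"
  have A: "inner v x + f x \<ge> c / \<beta>" for x
  proof -
    have "inner w x + \<beta> * f x \<le> c" by (rule S1') simp
    then have "(inner w x + \<beta> * f x) / \<beta> \<ge> c / \<beta>" using bneg by (simp add: divide_right_mono_neg)
    then show ?thesis using bneg by (simp add: v_def add_divide_distrib)
  qed
  have B0: "inner v y + r \<le> c / \<beta>" if "feas y" "r < f xs" for y r
  proof -
    have "inner w y + \<beta> * r \<ge> c" by (rule T1'[OF that])
    then have "(inner w y + \<beta> * r) / \<beta> \<le> c / \<beta>" using bneg by (simp add: divide_right_mono_neg)
    then show ?thesis using bneg by (simp add: v_def add_divide_distrib)
  qed
  have B: "inner v y + f xs \<le> c / \<beta>" if "feas y" for y
  proof -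
    have "f xs \<le> c / \<beta> - inner v y"
    proof (rule dense_le)
      fix r assume r: "r < f xs"
      show "r \<le> c / \<beta> - inner v y" using B0[OF that r] by simp
    qed
    then show ?thesis by simp
  qed
  have "f x \<ge> f xs - inner v (x - xs)" for x
    using A[of x] B[OF xs_feas] by (simp add: inner_diff_right)
  moreover have "inner v (y - xs) \<le> 0" if "feas y" for y
    using A[of xs] B[OF that] by (simp add: inner_diff_right)
  ultimately show ?thesis by blast
qed

lemma Q_nonneg: "Q x \<ge> 0"
  unfolding Q_def by (intro sum_nonneg) auto

lemma Q_ge: "j < m \<Longrightarrow> max 0 (inner (a j) x - b j) \<le> Q x"
  unfolding Q_def by (rule member_le_sum[of j "{..<m}" "\<lambda>j. max 0 (inner (a j) x - b j)"]) auto

lemma exact_penalty: "\<exists>\<Lambda>\<ge>0. \<forall>x. f xs \<le> f x + \<Lambda> * Q x"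
proof -
  obtain v where v1: "\<And>x. f x \<ge> f xs - inner v (x - xs)" and v2: "\<And>y. feas y \<Longrightarrow> inner v (y - xs) \<le> 0"
    using normal_vec by blast
  define Act where "Act = {j. j < m \<and> inner (a j) xs = b j}"
  define V where "V = insert 0 (a ` Act)"
  have finV: "finite V" unfolding V_def Act_def by auto
  define K where "K = conic hull (convex hull V)"
  have clK: "closed K" unfolding K_def
    by (intro closed_conic_hull_strong disjI2 disjI1 polytope_convex_hull finV)
  have cK: "convex K" unfolding K_def by (intro convex_conic_hull convex_convex_hull)
  have VK: "V \<subseteq> K" unfolding K_def
    by (metis hull_subset order_trans)
  have "v \<in> K"
  proof (rule ccontr)
    assume "v \<notin> K"
    obtain u c where uc: "inner u v < c" "\<forall>z\<in>K. inner u z > c"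
      using separating_hyperplane_closed_point[OF cK clK \<open>v \<notin> K\<close>] by blast
    have "0 \<in> K" using VK by (auto simp: V_def)
    then have c0: "c < 0" using uc by auto
    have nn: "inner u z \<ge> 0" if "z \<in> K" for z
    proof (rule ccontr)
      assume neg: "\<not> inner u z \<ge> 0"
      define t where "t = c / inner u z"
      have "t \<ge> 0" using neg c0 by (simp add: t_def divide_nonpos_neg less_imp_le)
      then have "t *\<^sub>R z \<in> K" using that conic_conic_hull unfolding K_def conic_def by blast
      moreover have "inner u (t *\<^sub>R z) = c" using neg by (simp add: t_def)
      ultimately show False using uc by force
    qed
    have actu: "inner u (a j) \<ge> 0" if "j \<in> Act" for j
      using nn VK that by (auto simp: V_def)
    have uv: "inner u v < 0" using uc c0 by simp
    define e where "e = - u"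
    define Ina where "Ina = {j. j < m \<and> j \<notin> Act}"
    have slack: "inner (a j) xs - b j < 0" if "j \<in> Ina" for j
      using xs_feas that by (auto simp: feas_def Ina_def Act_def le_less)
    have ev: "eventually (\<lambda>\<tau>. \<forall>j\<in>Ina. \<tau> * inner (a j) e < b j - inner (a j) xs) (at_right (0::real))"
    proof (rule eventually_ball_finite)
      show "finite Ina" by (auto simp: Ina_def)
      show "\<forall>j\<in>Ina. eventually (\<lambda>\<tau>. \<tau> * inner (a j) e < b j - inner (a j) xs) (at_right 0)"
      proof
        fix j assume "j \<in> Ina"
        have lim: "((\<lambda>\<tau>. \<tau> * inner (a j) e) \<longlongrightarrow> 0 * inner (a j) e) (at_right 0)"
          by (intro tendsto_intros)
        show "eventually (\<lambda>\<tau>. \<tau> * inner (a j) e < b j - inner (a j) xs) (at_right 0)"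
          using order_tendstoD(2)[OF lim] slack[OF \<open>j \<in> Ina\<close>] by simp
      qed
    qed
    have "eventually (\<lambda>\<tau>. 0 < \<tau> \<and> (\<forall>j\<in>Ina. \<tau> * inner (a j) e < b j - inner (a j) xs)) (at_right (0::real))"
      using ev eventually_at_right_less[of "0::real"] by eventually_elim auto
    then obtain \<tau> where tau: "\<tau> > 0" "\<forall>j\<in>Ina. \<tau> * inner (a j) e < b j - inner (a j) xs"
      using eventually_happens[of _ "at_right (0::real)"] by auto
    define y where "y = xs + \<tau> *\<^sub>R e"
    have "feas y" unfolding feas_def
    proof (intro allI impI)
      fix j assume j: "j < m"
      show "inner (a j) y - b j \<le> 0"
      proof (cases "j \<in> Act")
        case True
        then have "inner (a j) xs = b j" by (auto simp: Act_def)
        moreover have "\<tau> * inner (a j) e \<le> 0" using actu[OF True] tau(1)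
          by (simp add: e_def inner_commute mult_nonneg_nonneg)
        ultimately show ?thesis by (simp add: y_def inner_add_right)
      next
        case False
        then have "j \<in> Ina" using j by (auto simp: Ina_def)
        then show ?thesis using tau(2) by (auto simp: y_def inner_add_right)
      qed
    qed
    moreover have "inner v (y - xs) > 0"
      using uv tau(1) by (simp add: y_def e_def inner_commute mult_pos_neg)
    ultimately show False using v2 by force
  qed
  then obtain l0 z where l0: "l0 \<ge> 0" "z \<in> convex hull V" "v = l0 *\<^sub>R z"
    unfolding K_def conic_hull_explicit by blast
  then obtain u where u: "\<forall>p\<in>V. 0 \<le> u p" "sum u V = 1" "(\<Sum>p\<in>V. u p *\<^sub>R p) = z"
    using convex_hull_finite[OF finV] by blast
  have zQ: "inner z (x - xs) \<le> Q x" for x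
  proof -
    have each: "inner p (x - xs) \<le> Q x" if "p \<in> V" for p
    proof (cases "p = 0")
      case True then show ?thesis using Q_nonneg by simp
    next
      case False
      from that False have "p \<in> a ` Act" by (simp add: V_def)
      then obtain j where j: "j \<in> Act" "p = a j" by blast
      then have "inner p (x - xs) = inner (a j) x - b j" by (simp add: Act_def inner_diff_right)
      also have "\<dots> \<le> max 0 (inner (a j) x - b j)" by simp
      also have "\<dots> \<le> Q x" using j by (intro Q_ge) (auto simp: Act_def)
      finally show ?thesis .
    qed
    have "inner z (x - xs) = (\<Sum>p\<in>V. u p * inner p (x - xs))"
      by (simp add: u(3)[symmetric] inner_sum_left)
    also have "\<dots> \<le> (\<Sum>p\<in>V. u p * Q x)"
      using u(1) each by (intro sum_mono mult_left_mono) auto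
    also have "\<dots> = Q x" using u(2) by (simp add: sum_distrib_right[symmetric])
    finally show ?thesis .
  qed
  have "f xs \<le> f x + l0 * Q x" for x
  proof -
    have "f xs \<le> f x + inner v (x - xs)" using v1[of x] by simp
    also have "inner v (x - xs) = l0 * inner z (x - xs)" using l0 by simp
    also have "\<dots> \<le> l0 * Q x" using l0 zQ by (intro mult_left_mono) auto
    finally show ?thesis by simp
  qed
  then show ?thesis using l0 by blast
qed

end

definition P1d :: "real \<Rightarrow> real \<Rightarrow> real" where
  "P1d \<delta> s = (if s > \<delta> then s else if s < - \<delta> then 0 else (s + \<delta>)\<^sup>2 / (4 * \<delta>))"

lemma hdelta_eq: "hdelta \<delta> x a b = P1d \<delta> (inner a x - b) / norm a"
  by (simp add: hdelta_def P1d_def Let_def)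

lemma hdelta_grad_inner: "inner (hdelta_grad \<delta> x a b) y = pdelta' \<delta> (inner a x - b) / norm a * inner a y"
  by (simp add: hdelta_grad_def)

lemma pdelta'_bounds: "\<delta> > 0 \<Longrightarrow> 0 \<le> pdelta' \<delta> s \<and> pdelta' \<delta> s \<le> 1"
  by (auto simp: pdelta'_def divide_le_eq_1 zero_le_divide_iff)

lemma hdelta_grad_norm: "\<delta> > 0 \<Longrightarrow> norm (hdelta_grad \<delta> x a b) \<le> 1"
proof -
  assume d: "\<delta> > 0"
  show ?thesis
  proof (cases "a = 0")
    case True then show ?thesis by (simp add: hdelta_grad_def)
  next
    case False
    have "norm (hdelta_grad \<delta> x a b) = \<bar>pdelta' \<delta> (inner a x - b)\<bar>"
      using False by (simp add: hdelta_grad_def)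
    then show ?thesis using pdelta'_bounds[OF d] by simp
  qed
qed

lemma P1d_nonneg: "\<delta> > 0 \<Longrightarrow> 0 \<le> P1d \<delta> s"
  by (auto simp: P1d_def)

lemma P1d_ge: "\<delta> > 0 \<Longrightarrow> max 0 s \<le> P1d \<delta> s"
proof -
  assume d: "\<delta> > 0"
  have "s \<le> (s + \<delta>)\<^sup>2 / (4 * \<delta>)"
  proof -
    have "0 \<le> (s - \<delta>)\<^sup>2" by simp
    then have "4 * \<delta> * s \<le> (s + \<delta>)\<^sup>2" by (simp add: power2_eq_square algebra_simps)
    then show ?thesis using d by (simp add: field_simps)
  qed
  then show ?thesis using d by (auto simp: P1d_def)
qed

lemma P1d_feas: "\<delta> > 0 \<Longrightarrow> s \<le> 0 \<Longrightarrow> P1d \<delta> s \<le> \<delta> / 4"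
proof -
  assume d: "\<delta> > 0" and s: "s \<le> 0"
  have "(s + \<delta>)\<^sup>2 / (4 * \<delta>) \<le> \<delta> / 4" if "- \<delta> \<le> s"
  proof -
    have "(s + \<delta>)\<^sup>2 \<le> \<delta>\<^sup>2" using that s d by (intro power_mono) auto
    then show ?thesis using d by (simp add: field_simps power2_eq_square)
  qed
  then show ?thesis using d s by (auto simp: P1d_def)
qed

lemma P1d_le: "\<delta> > 0 \<Longrightarrow> P1d \<delta> s \<le> \<bar>s\<bar> + \<delta>"
proof -
  assume d: "\<delta> > 0"
  have "(s + \<delta>)\<^sup>2 / (4 * \<delta>) \<le> \<bar>s\<bar> + \<delta>" if "- \<delta> \<le> s" "s \<le> \<delta>"
  proof -
    have "(s + \<delta>) * (s + \<delta>) \<le> (s + \<delta>) * (2 * \<delta>)" using that by (intro mult_left_mono) auto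
    also have "\<dots> \<le> 4 * \<delta> * (\<bar>s\<bar> + \<delta>)"
    proof -
      have h1: "\<delta> * s \<le> \<delta> * \<bar>s\<bar>" using d by (intro mult_left_mono) auto
      have h2: "0 \<le> \<delta> * \<bar>s\<bar>" "0 \<le> \<delta> * \<delta>" using d by auto
      have "(s + \<delta>) * (2 * \<delta>) = 2 * (\<delta> * s) + 2 * (\<delta> * \<delta>)" by (simp add: algebra_simps)
      moreover have "4 * \<delta> * (\<bar>s\<bar> + \<delta>) = 4 * (\<delta> * \<bar>s\<bar>) + 4 * (\<delta> * \<delta>)" by (simp add: algebra_simps)
      ultimately show ?thesis using h1 h2 by linarith
    qed
    finally show ?thesis using d by (simp add: field_simps power2_eq_square)
  qed
  then show ?thesis using d by (auto simp: P1d_def)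
qed

lemma P1d_conv: "\<delta> > 0 \<Longrightarrow> P1d \<delta> s + pdelta' \<delta> s * (t - s) \<le> P1d \<delta> t"
proof -
  assume d: "\<delta> > 0"
  consider "s > \<delta>" | "s < - \<delta>" | "- \<delta> \<le> s \<and> s \<le> \<delta>" by linarith
  then show ?thesis
  proof cases
    case 1
    then have l: "P1d \<delta> s + pdelta' \<delta> s * (t - s) = t" by (simp add: P1d_def pdelta'_def)
    have "t \<le> P1d \<delta> t" using P1d_ge[OF d, of t] by simp
    then show ?thesis using l by simp
  next
    case 2
    then have "P1d \<delta> s + pdelta' \<delta> s * (t - s) = 0" using d by (simp add: P1d_def pdelta'_def)
    then show ?thesis using P1d_nonneg[OF d] by simp
  next
    case 3
    then have l: "P1d \<delta> s + pdelta' \<delta> s * (t - s) = (s + \<delta>) * (2 * t - s + \<delta>) / (4 * \<delta>)"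
    proof -
      have e1: "P1d \<delta> s = (s + \<delta>)\<^sup>2 / (4 * \<delta>)" using 3 by (simp add: P1d_def)
      have e2: "pdelta' \<delta> s = (s + \<delta>) / (2 * \<delta>)" using 3 by (simp add: pdelta'_def)
      have e3: "(s + \<delta>)\<^sup>2 / (4 * \<delta>) + (s + \<delta>) / (2 * \<delta>) * (t - s) = (s + \<delta>) * (2 * t - s + \<delta>) / (4 * \<delta>)"
        using d by (simp add: field_simps power2_eq_square)
      show ?thesis using e1 e2 e3 by simp
    qed
    consider "t > \<delta>" | "t < - \<delta>" | "- \<delta> \<le> t \<and> t \<le> \<delta>" by linarith
    then show ?thesis
    proof cases
      case 1
      have "4 * \<delta> * t - (s + \<delta>) * (2 * t - s + \<delta>) = (\<delta> - s) * (2 * t - s - \<delta>)"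
        by (simp add: algebra_simps)
      moreover have "(\<delta> - s) * (2 * t - s - \<delta>) \<ge> 0" using 1 3 by (intro mult_nonneg_nonneg) auto
      ultimately have "(s + \<delta>) * (2 * t - s + \<delta>) \<le> 4 * \<delta> * t" by linarith
      then have "(s + \<delta>) * (2 * t - s + \<delta>) / (4 * \<delta>) \<le> t" using d by (simp add: field_simps)
      then show ?thesis using l 1 by (simp add: P1d_def)
    next
      case 2
      have "(s + \<delta>) * (2 * t - s + \<delta>) \<le> 0" using 2 3 by (intro mult_nonneg_nonpos) auto
      then have "(s + \<delta>) * (2 * t - s + \<delta>) / (4 * \<delta>) \<le> 0" using d by (simp add: divide_nonpos_pos)
      then show ?thesis using l 2 d by (simp add: P1d_def)
    next
      case 4: 3
      have "(t + \<delta>)\<^sup>2 - (s + \<delta>) * (2 * t - s + \<delta>) = (t - s)\<^sup>2"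
        by (simp add: algebra_simps power2_eq_square)
      then have "(s + \<delta>) * (2 * t - s + \<delta>) \<le> (t + \<delta>)\<^sup>2" by (smt (verit) zero_le_power2)
      then have "(s + \<delta>) * (2 * t - s + \<delta>) / (4 * \<delta>) \<le> (t + \<delta>)\<^sup>2 / (4 * \<delta>)" using d
        by (intro divide_right_mono) auto
      then show ?thesis using l 4 by (simp add: P1d_def)
    qed
  qed
qed

lemma hdelta_conv:
  assumes "\<delta> > 0" "a \<noteq> 0"
  shows "hdelta \<delta> x a b + inner (hdelta_grad \<delta> x a b) (y - x) \<le> hdelta \<delta> y a b"
proof -
  have "inner (hdelta_grad \<delta> x a b) (y - x) = pdelta' \<delta> (inner a x - b) * ((inner a y - b) - (inner a x - b)) / norm a"
    by (simp add: hdelta_grad_inner inner_diff_right diff_divide_distrib right_diff_distrib)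
  then have "hdelta \<delta> x a b + inner (hdelta_grad \<delta> x a b) (y - x)
      = (P1d \<delta> (inner a x - b) + pdelta' \<delta> (inner a x - b) * ((inner a y - b) - (inner a x - b))) / norm a"
    by (simp add: hdelta_eq add_divide_distrib)
  also have "\<dots> \<le> P1d \<delta> (inner a y - b) / norm a"
    using assms by (intro divide_right_mono P1d_conv) auto
  finally show ?thesis by (simp add: hdelta_eq)
qed

lemma hdelta_nonneg: "\<delta> > 0 \<Longrightarrow> 0 \<le> hdelta \<delta> x a b"
  by (simp add: hdelta_eq P1d_nonneg)

lemma hdelta_ge: "\<delta> > 0 \<Longrightarrow> a \<noteq> 0 \<Longrightarrow> max 0 (inner a x - b) \<le> norm a * hdelta \<delta> x a b"
  using P1d_ge[of \<delta> "inner a x - b"] by (simp add: hdelta_eq)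

lemma hdelta_feas: "\<delta> > 0 \<Longrightarrow> inner a x - b \<le> 0 \<Longrightarrow> hdelta \<delta> x a b \<le> \<delta> / 4 / norm a"
proof -
  assume "\<delta> > 0" "inner a x - b \<le> 0"
  then have "P1d \<delta> (inner a x - b) \<le> \<delta> / 4" by (rule P1d_feas)
  then have "P1d \<delta> (inner a x - b) / norm a \<le> (\<delta> / 4) / norm a" by (rule divide_right_mono) simp
  then show ?thesis by (simp only: hdelta_eq)
qed

lemma hdelta_le: "\<delta> > 0 \<Longrightarrow> \<delta> \<le> 1 \<Longrightarrow> a \<noteq> 0 \<Longrightarrow> hdelta \<delta> x a b \<le> norm x + (\<bar>b\<bar> + 1) / norm a"
proof -
  assume d: "\<delta> > 0" "\<delta> \<le> 1" and a: "a \<noteq> 0"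
  have "hdelta \<delta> x a b \<le> (\<bar>inner a x - b\<bar> + \<delta>) / norm a"
    using P1d_le[OF d(1), of "inner a x - b"] by (simp add: hdelta_eq divide_right_mono)
  also have "\<dots> \<le> (norm a * norm x + (\<bar>b\<bar> + 1)) / norm a"
  proof (intro divide_right_mono)
    have "\<bar>inner a x\<bar> \<le> norm a * norm x" by (rule Cauchy_Schwarz_ineq2)
    then show "\<bar>inner a x - b\<bar> + \<delta> \<le> norm a * norm x + (\<bar>b\<bar> + 1)" using d by linarith
  qed simp
  also have "\<dots> = norm x + (\<bar>b\<bar> + 1) / norm a" using a by (simp add: add_divide_distrib)
  finally show ?thesis .
qed

section \<open>Averaging over index sequences\<close>

definition CS :: "nat \<Rightarrow> nat \<Rightarrow> (nat \<Rightarrow> nat) set" where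
  "CS m T = PiE {1..T} (\<lambda>_. {..<m})"

definition Av :: "nat \<Rightarrow> nat \<Rightarrow> ((nat \<Rightarrow> nat) \<Rightarrow> real) \<Rightarrow> real" where
  "Av m T \<Phi> = (\<Sum>c\<in>CS m T. \<Phi> c) / real m ^ T"

lemma finite_CS: "finite (CS m T)"
  unfolding CS_def by (intro finite_PiE) auto

lemma card_CS: "card (CS m T) = m ^ T"
  unfolding CS_def by (simp add: card_PiE)

lemma CS_mem: "c \<in> CS m T \<Longrightarrow> 1 \<le> k \<Longrightarrow> k \<le> T \<Longrightarrow> c k < m"
  unfolding CS_def by (auto simp: PiE_def Pi_def)

lemma Av_const: "m \<ge> 1 \<Longrightarrow> Av m T (\<lambda>_. r) = r"
  by (simp add: Av_def card_CS)

lemma Av_add: "Av m T (\<lambda>c. \<Phi> c + \<Psi> c) = Av m T \<Phi> + Av m T \<Psi>"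
  by (simp add: Av_def sum.distrib add_divide_distrib)

lemma Av_diff: "Av m T (\<lambda>c. \<Phi> c - \<Psi> c) = Av m T \<Phi> - Av m T \<Psi>"
  by (simp add: Av_def sum_subtractf diff_divide_distrib)

lemma Av_cmult: "Av m T (\<lambda>c. r * \<Phi> c) = r * Av m T \<Phi>"
  by (simp add: Av_def sum_distrib_left)

lemma Av_mono: "(\<And>c. c \<in> CS m T \<Longrightarrow> \<Phi> c \<le> \<Psi> c) \<Longrightarrow> Av m T \<Phi> \<le> Av m T \<Psi>"
  unfolding Av_def by (intro divide_right_mono sum_mono) auto

lemma Av_nonneg: "(\<And>c. c \<in> CS m T \<Longrightarrow> 0 \<le> \<Phi> c) \<Longrightarrow> 0 \<le> Av m T \<Phi>"
  unfolding Av_def by (intro divide_nonneg_nonneg sum_nonneg) auto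

lemma Av_sum: "finite K \<Longrightarrow> Av m T (\<lambda>c. \<Sum>k\<in>K. \<Phi> k c) = (\<Sum>k\<in>K. Av m T (\<Phi> k))"
  unfolding Av_def by (simp add: sum.swap[of _ K] sum_divide_distrib)

lemma sum_PiE_split:
  assumes "finite S" "k \<notin> S"
  shows "(\<Sum>c\<in>PiE (insert k S) B. \<Phi> c) = (\<Sum>y\<in>B k. \<Sum>g\<in>PiE S B. \<Phi> (g(k := y)))"
proof -
  have "(\<Sum>c\<in>PiE (insert k S) B. \<Phi> c) = (\<Sum>p\<in>B k \<times> PiE S B. \<Phi> ((\<lambda>(y, g). g(k := y)) p))"
    unfolding PiE_insert_eq by (subst sum.reindex) (use inj_combinator[OF assms(2)] in auto)
  also have "\<dots> = (\<Sum>y\<in>B k. \<Sum>g\<in>PiE S B. \<Phi> (g(k := y)))"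
    by (simp add: sum.cartesian_product prod.case_distrib)
  finally show ?thesis .
qed

lemma Av_step:
  assumes m: "m \<ge> 1" and k: "1 \<le> k" "k \<le> T"
    and inv: "\<And>c j j'. \<phi> (c(k := j')) j = \<phi> c j"
  shows "Av m T (\<lambda>c. \<phi> c (c k)) = Av m T (\<lambda>c. (\<Sum>j<m. \<phi> c j) / real m)"
proof -
  define S where "S = {1..T} - {k}"
  have ins: "{1..T} = insert k S" using k by (auto simp: S_def)
  have fS: "finite S" "k \<notin> S" by (auto simp: S_def)
  have "(\<Sum>c\<in>CS m T. \<phi> c (c k)) = (\<Sum>y<m. \<Sum>g\<in>PiE S (\<lambda>_. {..<m}). \<phi> (g(k := y)) y)"
    unfolding CS_def ins by (subst sum_PiE_split[OF fS]) simp
  also have "\<dots> = (\<Sum>y<m. \<Sum>g\<in>PiE S (\<lambda>_. {..<m}). \<phi> g y)" by (simp add: inv)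
  finally have L: "(\<Sum>c\<in>CS m T. \<phi> c (c k)) = (\<Sum>y<m. \<Sum>g\<in>PiE S (\<lambda>_. {..<m}). \<phi> g y)" .
  have "(\<Sum>c\<in>CS m T. (\<Sum>j<m. \<phi> c j) / real m)
      = (\<Sum>y<m. \<Sum>g\<in>PiE S (\<lambda>_. {..<m}). (\<Sum>j<m. \<phi> (g(k := y)) j) / real m)"
    unfolding CS_def ins by (subst sum_PiE_split[OF fS]) simp
  also have "\<dots> = (\<Sum>y<m. \<Sum>g\<in>PiE S (\<lambda>_. {..<m}). (\<Sum>j<m. \<phi> g j) / real m)" by (simp add: inv)
  also have "\<dots> = real m * (\<Sum>g\<in>PiE S (\<lambda>_. {..<m}). (\<Sum>j<m. \<phi> g j) / real m)" by simp
  also have "\<dots> = (\<Sum>g\<in>PiE S (\<lambda>_. {..<m}). \<Sum>j<m. \<phi> g j)" using m by (simp add: sum_divide_distrib[symmetric])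
  also have "\<dots> = (\<Sum>y<m. \<Sum>g\<in>PiE S (\<lambda>_. {..<m}). \<phi> g y)" by (rule sum.swap)
  finally show ?thesis using L by (simp add: Av_def)
qed

context pen begin

definition step :: "nat \<Rightarrow> 'a \<Rightarrow> nat \<Rightarrow> 'a" where
  "step k x j = x - s k *\<^sub>R (sg x + \<gamma> k *\<^sub>R hdelta_grad (\<delta> k) x (a j) (b j))"

primrec Xs :: "'a \<Rightarrow> (nat \<Rightarrow> nat) \<Rightarrow> nat \<Rightarrow> 'a" where
  "Xs \<xi> c 0 = \<xi>"
| "Xs \<xi> c (Suc k) = (if k = 0 then \<xi> else step k (Xs \<xi> c k) (c k))"

lemma Xs_1 [simp]: "Xs \<xi> c (Suc 0) = \<xi>" by simp

lemma Xs_Suc: "k \<ge> 1 \<Longrightarrow> Xs \<xi> c (Suc k) = step k (Xs \<xi> c k) (c k)" by simp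

lemma Xs_dep: "(\<And>l. 1 \<le> l \<Longrightarrow> l < k \<Longrightarrow> c l = c' l) \<Longrightarrow> Xs \<xi> c k = Xs \<xi> c' k"
proof (induction k)
  case 0 then show ?case by simp
next
  case (Suc k)
  show ?case
  proof (cases "k = 0")
    case True then show ?thesis by simp
  next
    case False
    then have "Xs \<xi> c k = Xs \<xi> c' k" using Suc by auto
    moreover have "c k = c' k" using Suc False by auto
    ultimately show ?thesis by simp
  qed
qed

lemma Xs_upd: "k \<le> l \<Longrightarrow> Xs \<xi> (c(l := j)) k = Xs \<xi> c k"
  by (rule Xs_dep) auto

lemma s_pos: "k \<ge> 1 \<Longrightarrow> s k > 0"
  using mu_pos by (simp add: s_def)

lemma delta_pos: "k \<ge> 1 \<Longrightarrow> \<delta> k > 0"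
  by (simp add: delta_def)

lemma delta_le: "k \<ge> 1 \<Longrightarrow> \<delta> k \<le> 1 / real k"
proof -
  assume k: "k \<ge> 1"
  have "real k powr 1 \<le> real k powr d" using d k by (intro powr_mono) auto
  then have "real k \<le> real k powr d" by simp
  then have "1 / real k powr d \<le> 1 / real k" using k by (intro divide_left_mono) auto
  then show ?thesis by (simp add: delta_def)
qed

lemma delta_le1: "k \<ge> 1 \<Longrightarrow> \<delta> k \<le> 1"
proof -
  assume k: "k \<ge> 1"
  have "1 / real k \<le> 1" using k by simp
  then show ?thesis using delta_le[OF k] by linarith
qed

lemma gamma_nonneg: "0 \<le> \<gamma> k" by (simp add: gamma_def)

lemma gamma_mono: "1 \<le> k \<Longrightarrow> k \<le> T \<Longrightarrow> \<gamma> k \<le> \<gamma> T"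
  unfolding gamma_def using g by (intro powr_mono2) auto

lemma gamma_sq: "(\<gamma> k)\<^sup>2 = ln (real k) powr (2 * g)"
proof -
  have "(ln (real k) powr g)\<^sup>2 = ln (real k) powr g * ln (real k) powr g" by (simp add: power2_eq_square)
  also have "\<dots> = ln (real k) powr (g + g)" by (rule powr_add[symmetric])
  also have "g + g = 2 * g" by simp
  finally show ?thesis by (simp add: gamma_def)
qed

lemma gamma_sq_bound: "k \<ge> 1 \<Longrightarrow> (\<gamma> k)\<^sup>2 \<le> (2 * g) powr (2 * g) * real k"
proof -
  assume k: "k \<ge> 1"
  show ?thesis
  proof (cases "k = 1")
    case True then show ?thesis by (simp add: gamma_def)
  next
    case False
    then have "real k > 1" using k by simp
    have "ln (real k) powr (2 * g) \<le> (2 * g) powr (2 * g) * real k"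
      by (rule ln_powr_bound2) (use \<open>real k > 1\<close> g in auto)
    then show ?thesis by (simp only: gamma_sq)
  qed
qed

definition C2 where "C2 = (2 * g) powr (2 * g)"

lemma C2_nonneg: "C2 \<ge> 0" by (simp add: C2_def)

lemma gamma_delta: "k \<ge> 1 \<Longrightarrow> \<gamma> k * \<delta> k \<le> 1 + C2"
proof -
  assume k: "k \<ge> 1"
  have "\<gamma> k \<le> 1 + (\<gamma> k)\<^sup>2" by (rule le_1_sq)
  also have "\<dots> \<le> 1 + C2 * real k" using gamma_sq_bound[OF k] by (simp add: C2_def)
  finally have g1: "\<gamma> k \<le> 1 + C2 * real k" .
  have "\<gamma> k * \<delta> k \<le> (1 + C2 * real k) * (1 / real k)"
    using g1 delta_le[OF k] delta_pos[OF k] gamma_nonneg C2_nonneg by (intro mult_mono) auto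
  also have "\<dots> = 1 / real k + C2" using k by (simp add: field_simps)
  also have "\<dots> \<le> 1 + C2" using k by simp
  finally show ?thesis .
qed

lemma step_norm: "k \<ge> 1 \<Longrightarrow> norm (step k x j) \<le> norm x + s k * (M1 * norm x + M2 + \<gamma> k)"
proof -
  assume k: "k \<ge> 1"
  have "norm (sg x + \<gamma> k *\<^sub>R hdelta_grad (\<delta> k) x (a j) (b j)) \<le> norm (sg x) + \<gamma> k * norm (hdelta_grad (\<delta> k) x (a j) (b j))"
    using norm_triangle_ineq[of "sg x" "\<gamma> k *\<^sub>R hdelta_grad (\<delta> k) x (a j) (b j)"] gamma_nonneg[of k] by simp
  also have "\<dots> \<le> (M1 * norm x + M2) + \<gamma> k * 1"
    using sg_norm[of x] hdelta_grad_norm[OF delta_pos[OF k]] gamma_nonneg by (intro add_mono mult_left_mono) auto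
  finally have G: "norm (sg x + \<gamma> k *\<^sub>R hdelta_grad (\<delta> k) x (a j) (b j)) \<le> M1 * norm x + M2 + \<gamma> k" by simp
  have "norm (step k x j) \<le> norm x + norm (s k *\<^sub>R (sg x + \<gamma> k *\<^sub>R hdelta_grad (\<delta> k) x (a j) (b j)))"
    unfolding step_def by (rule norm_triangle_ineq4)
  also have "\<dots> \<le> norm x + s k * (M1 * norm x + M2 + \<gamma> k)"
    using G s_pos[OF k] by (simp add: mult_left_mono)
  finally show ?thesis .
qed

lemma Xs_growth: "\<exists>\<alpha> \<beta>. \<forall>\<xi> c. norm (Xs \<xi> c k) \<le> \<alpha> * norm \<xi> + \<beta>"
proof (induction k)
  case 0 then show ?case by (intro exI[of _ 1] exI[of _ 0]) simp
next
  case (Suc k)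
  then obtain \<alpha> \<beta> where ab: "\<And>\<xi> c. norm (Xs \<xi> c k) \<le> \<alpha> * norm \<xi> + \<beta>" by blast
  show ?case
  proof (cases "k = 0")
    case True then show ?thesis by (intro exI[of _ 1] exI[of _ 0]) simp
  next
    case False
    then have k: "k \<ge> 1" by simp
    define q where "q = 1 + s k * M1"
    have q: "q \<ge> 0" using s_pos[OF k] M1 by (simp add: q_def)
    have "norm (Xs \<xi> c (Suc k)) \<le> (q * \<alpha>) * norm \<xi> + (q * \<beta> + s k * (M2 + \<gamma> k))" for \<xi> c
    proof -
      have "norm (Xs \<xi> c (Suc k)) \<le> norm (Xs \<xi> c k) + s k * (M1 * norm (Xs \<xi> c k) + M2 + \<gamma> k)"
        using k by (simp add: step_norm)
      also have "\<dots> = q * norm (Xs \<xi> c k) + s k * (M2 + \<gamma> k)" by (simp add: q_def algebra_simps)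
      also have "\<dots> \<le> q * (\<alpha> * norm \<xi> + \<beta>) + s k * (M2 + \<gamma> k)"
        using q ab by (intro add_right_mono mult_left_mono) auto
      finally show ?thesis by (simp add: algebra_simps)
    qed
    then show ?thesis by blast
  qed
qed

end

lemma norm_sub_scale_sq:
  fixes u v :: "'a::real_inner"
  shows "(norm (u - t *\<^sub>R v))\<^sup>2 = (norm u)\<^sup>2 - 2 * t * inner v u + t\<^sup>2 * (norm v)\<^sup>2"
  unfolding power2_norm_eq_inner by (simp add: inner_diff_left inner_diff_right inner_commute power2_eq_square algebra_simps)

lemma Av_lin: "m \<ge> 1 \<Longrightarrow> Av m T (\<lambda>c. A c - p * (B c + q * A c) + r * N c + z)
    = Av m T A - p * (Av m T B + q * Av m T A) + r * Av m T N + z"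
  by (simp add: Av_add Av_diff Av_cmult Av_const)

context pen begin

definition hbar :: "nat \<Rightarrow> 'a \<Rightarrow> real" where
  "hbar k x = (\<Sum>j<m. hdelta (\<delta> k) x (a j) (b j)) / real m"

definition A0 where "A0 = (\<Sum>j<m. 1 / (4 * norm (a j))) / real m"
definition Amx where "Amx = real m * (\<Sum>j<m. norm (a j))"
definition Cb where "Cb = (\<Sum>j<m. (\<bar>b j\<bar> + 1) / norm (a j)) / real m"

lemma m_gt0: "real m > 0" using m_pos by simp

lemma A0_nonneg: "A0 \<ge> 0" unfolding A0_def by (intro divide_nonneg_nonneg sum_nonneg) auto
lemma Cb_nonneg: "Cb \<ge> 0" unfolding Cb_def by (intro divide_nonneg_nonneg sum_nonneg) auto
lemma Amx_nonneg: "Amx \<ge> 0" unfolding Amx_def by (intro mult_nonneg_nonneg sum_nonneg) auto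

lemma hbar_nonneg: "k \<ge> 1 \<Longrightarrow> 0 \<le> hbar k x"
  unfolding hbar_def using delta_pos by (intro divide_nonneg_nonneg sum_nonneg hdelta_nonneg) auto

lemma hbar_xs: "k \<ge> 1 \<Longrightarrow> hbar k xs \<le> \<delta> k * A0"
proof -
  assume k: "k \<ge> 1"
  have "(\<Sum>j<m. hdelta (\<delta> k) xs (a j) (b j)) \<le> (\<Sum>j<m. \<delta> k * (1 / (4 * norm (a j))))"
  proof (intro sum_mono)
    fix j assume "j \<in> {..<m}"
    then have "inner (a j) xs - b j \<le> 0" using xs_feas by (auto simp: feas_def)
    then have "hdelta (\<delta> k) xs (a j) (b j) \<le> \<delta> k / 4 / norm (a j)" using delta_pos[OF k] by (rule hdelta_feas[rotated])
    then show "hdelta (\<delta> k) xs (a j) (b j) \<le> \<delta> k * (1 / (4 * norm (a j)))" by simp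
  qed
  then have "hbar k xs \<le> (\<Sum>j<m. \<delta> k * (1 / (4 * norm (a j)))) / real m"
    unfolding hbar_def using m_gt0 by (intro divide_right_mono) auto
  also have "(\<Sum>j<m. \<delta> k * (1 / (4 * norm (a j)))) = \<delta> k * (\<Sum>j<m. 1 / (4 * norm (a j)))"
    by (rule sum_distrib_left[symmetric])
  also have "\<dots> / real m = \<delta> k * A0" by (simp add: A0_def)
  finally show ?thesis .
qed

lemma Q_hbar: "k \<ge> 1 \<Longrightarrow> Q x \<le> Amx * hbar k x"
proof -
  assume k: "k \<ge> 1"
  define S where "S = (\<Sum>j<m. norm (a j))"
  have "Q x \<le> (\<Sum>j<m. norm (a j) * hdelta (\<delta> k) x (a j) (b j))"
    unfolding Q_def using delta_pos[OF k] a_nz by (intro sum_mono hdelta_ge) auto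
  also have "\<dots> \<le> (\<Sum>j<m. S * hdelta (\<delta> k) x (a j) (b j))"
  proof (intro sum_mono mult_right_mono)
    fix j assume "j \<in> {..<m}"
    then show "norm (a j) \<le> S" unfolding S_def by (intro member_le_sum) auto
    show "0 \<le> hdelta (\<delta> k) x (a j) (b j)" using delta_pos[OF k] by (rule hdelta_nonneg)
  qed
  also have "\<dots> = Amx * hbar k x" using m_gt0
    by (simp add: Amx_def hbar_def S_def sum_distrib_left[symmetric])
  finally show ?thesis .
qed

lemma hbar_le: "k \<ge> 1 \<Longrightarrow> hbar k x \<le> norm x + Cb"
proof -
  assume k: "k \<ge> 1"
  have "(\<Sum>j<m. hdelta (\<delta> k) x (a j) (b j)) \<le> (\<Sum>j<m. norm x + (\<bar>b j\<bar> + 1) / norm (a j))"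
    using delta_pos[OF k] delta_le1[OF k] a_nz by (intro sum_mono hdelta_le) auto
  also have "\<dots> = real m * norm x + (\<Sum>j<m. (\<bar>b j\<bar> + 1) / norm (a j))" by (simp add: sum.distrib)
  finally have "hbar k x \<le> (real m * norm x + (\<Sum>j<m. (\<bar>b j\<bar> + 1) / norm (a j))) / real m"
    unfolding hbar_def using m_gt0 by (intro divide_right_mono) auto
  also have "\<dots> = norm x + Cb" using m_gt0 by (simp add: Cb_def add_divide_distrib)
  finally show ?thesis .
qed

definition Lam where "Lam = (SOME L. L \<ge> 0 \<and> (\<forall>x. f xs \<le> f x + L * Q x))"

lemma Lam: "Lam \<ge> 0" "f xs \<le> f x + Lam * Q x"
  using someI_ex[OF exact_penalty] unfolding Lam_def[symmetric] by auto

definition Lam' where "Lam' = Lam * Amx"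

lemma Lam'_nonneg: "Lam' \<ge> 0" using Lam(1) Amx_nonneg by (simp add: Lam'_def)

lemma penalty_hbar: "k \<ge> 1 \<Longrightarrow> f xs \<le> f x + Lam' * hbar k x"
proof -
  assume k: "k \<ge> 1"
  have "Lam * Q x \<le> Lam * (Amx * hbar k x)" using Lam(1) Q_hbar[OF k] by (rule mult_left_mono[rotated])
  then show ?thesis using Lam(2)[of x] by (simp add: Lam'_def mult.assoc)
qed

lemma one_step:
  assumes k: "k \<ge> 1" and j: "j < m"
  shows "(norm (step k x j - xs))\<^sup>2 \<le> (norm (x - xs))\<^sup>2 - 2 * s k * (f x - f xs + \<mu> / 2 * (norm (x - xs))\<^sup>2)
     + (s k)\<^sup>2 * (M1 * norm x + M2 + \<gamma> k)\<^sup>2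
     - 2 * s k * \<gamma> k * (hdelta (\<delta> k) x (a j) (b j) - hdelta (\<delta> k) xs (a j) (b j))"
proof -
  define hg where "hg = hdelta_grad (\<delta> k) x (a j) (b j)"
  define G where "G = sg x + \<gamma> k *\<^sub>R hg"
  have st: "step k x j - xs = (x - xs) - s k *\<^sub>R G" by (simp add: step_def G_def hg_def)
  have eq: "(norm (step k x j - xs))\<^sup>2 = (norm (x - xs))\<^sup>2 - 2 * s k * inner G (x - xs) + (s k)\<^sup>2 * (norm G)\<^sup>2"
    unfolding st by (rule norm_sub_scale_sq)
  have iG: "inner G (x - xs) = inner (sg x) (x - xs) + \<gamma> k * inner hg (x - xs)"
    by (simp add: G_def inner_add_left)
  have i1: "inner (sg x) (x - xs) \<ge> f x - f xs + \<mu> / 2 * (norm (x - xs))\<^sup>2"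
  proof -
    have "f xs \<ge> f x + inner (sg x) (xs - x) + \<mu> / 2 * (norm (xs - x))\<^sup>2" by (rule sub_ineq)
    moreover have "inner (sg x) (xs - x) = - inner (sg x) (x - xs)" by (simp add: inner_diff_right)
    moreover have "norm (xs - x) = norm (x - xs)" by (rule norm_minus_commute)
    ultimately show ?thesis by simp
  qed
  have i2: "inner hg (x - xs) \<ge> hdelta (\<delta> k) x (a j) (b j) - hdelta (\<delta> k) xs (a j) (b j)"
  proof -
    have "hdelta (\<delta> k) x (a j) (b j) + inner hg (xs - x) \<le> hdelta (\<delta> k) xs (a j) (b j)"
      unfolding hg_def using delta_pos[OF k] a_nz[OF j] by (rule hdelta_conv)
    moreover have "inner hg (xs - x) = - inner hg (x - xs)" by (simp add: inner_diff_right)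
    ultimately show ?thesis by simp
  qed
  have nG: "norm G \<le> M1 * norm x + M2 + \<gamma> k"
  proof -
    have "norm G \<le> norm (sg x) + \<gamma> k * norm hg"
      using norm_triangle_ineq[of "sg x" "\<gamma> k *\<^sub>R hg"] gamma_nonneg[of k] by (simp add: G_def)
    also have "\<dots> \<le> (M1 * norm x + M2) + \<gamma> k * 1"
      using sg_norm[of x] hdelta_grad_norm[OF delta_pos[OF k]] gamma_nonneg[of k]
      by (intro add_mono mult_left_mono) (auto simp: hg_def)
    finally show ?thesis by simp
  qed
  have nG2: "(norm G)\<^sup>2 \<le> (M1 * norm x + M2 + \<gamma> k)\<^sup>2" using nG by (intro power_mono) auto
  have sk: "s k > 0" by (rule s_pos[OF k])
  have g0: "\<gamma> k \<ge> 0" by (rule gamma_nonneg)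
  have t1: "2 * s k * inner (sg x) (x - xs) \<ge> 2 * s k * (f x - f xs + \<mu> / 2 * (norm (x - xs))\<^sup>2)"
    using i1 sk by (intro mult_left_mono) auto
  have t2: "2 * s k * \<gamma> k * inner hg (x - xs) \<ge> 2 * s k * \<gamma> k * (hdelta (\<delta> k) x (a j) (b j) - hdelta (\<delta> k) xs (a j) (b j))"
    using i2 sk g0 by (intro mult_left_mono) auto
  have t3: "(s k)\<^sup>2 * (norm G)\<^sup>2 \<le> (s k)\<^sup>2 * (M1 * norm x + M2 + \<gamma> k)\<^sup>2"
    using nG2 by (intro mult_left_mono) auto
  have "2 * s k * inner G (x - xs) = 2 * s k * inner (sg x) (x - xs) + 2 * s k * \<gamma> k * inner hg (x - xs)"
    unfolding iG by (simp add: algebra_simps)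
  then show ?thesis using eq t1 t2 t3 by linarith
qed

definition DD where "DD \<xi> c k = (norm (Xs \<xi> c k - xs))\<^sup>2"
definition NN where "NN \<xi> c k = (M1 * norm (Xs \<xi> c k) + M2 + \<gamma> k)\<^sup>2"
definition ee where "ee \<xi> T k = Av m T (\<lambda>c. DD \<xi> c k)"
definition ph where "ph \<xi> T k = Av m T (\<lambda>c. f (Xs \<xi> c k) - f xs + \<gamma> k * hbar k (Xs \<xi> c k))"
definition nk where "nk \<xi> T k = Av m T (\<lambda>c. NN \<xi> c k)"
definition hk where "hk \<xi> T k = Av m T (\<lambda>c. hbar k (Xs \<xi> c k))"

lemma avg_step:
  assumes k: "1 \<le> k" "k \<le> T"
  shows "ee \<xi> T (Suc k) \<le> ee \<xi> T k - 2 * s k * (ph \<xi> T k + \<mu> / 2 * ee \<xi> T k) + (s k)\<^sup>2 * nk \<xi> T k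
      + 2 * s k * \<gamma> k * hbar k xs"
proof -
  define \<phi> where "\<phi> c j = DD \<xi> c k - 2 * s k * (f (Xs \<xi> c k) - f xs + \<mu> / 2 * DD \<xi> c k) + (s k)\<^sup>2 * NN \<xi> c k
     - 2 * s k * \<gamma> k * (hdelta (\<delta> k) (Xs \<xi> c k) (a j) (b j) - hdelta (\<delta> k) xs (a j) (b j))" for c j
  have "ee \<xi> T (Suc k) \<le> Av m T (\<lambda>c. \<phi> c (c k))"
    unfolding ee_def
  proof (rule Av_mono)
    fix c assume c: "c \<in> CS m T"
    have ck: "c k < m" using CS_mem[OF c k] .
    have os: "(norm (step k (Xs \<xi> c k) (c k) - xs))\<^sup>2 \<le> (norm (Xs \<xi> c k - xs))\<^sup>2 - 2 * s k * (f (Xs \<xi> c k) - f xs + \<mu> / 2 * (norm (Xs \<xi> c k - xs))\<^sup>2)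
     + (s k)\<^sup>2 * (M1 * norm (Xs \<xi> c k) + M2 + \<gamma> k)\<^sup>2
     - 2 * s k * \<gamma> k * (hdelta (\<delta> k) (Xs \<xi> c k) (a (c k)) (b (c k)) - hdelta (\<delta> k) xs (a (c k)) (b (c k)))"
      by (rule one_step[OF k(1) ck])
    have "Xs \<xi> c (Suc k) = step k (Xs \<xi> c k) (c k)" using k by (simp add: Xs_Suc)
    then show "DD \<xi> c (Suc k) \<le> \<phi> c (c k)"
      unfolding \<phi>_def DD_def NN_def using os by simp
  qed
  also have "\<dots> = Av m T (\<lambda>c. (\<Sum>j<m. \<phi> c j) / real m)"
    by (rule Av_step[OF m_pos k]) (simp add: \<phi>_def DD_def NN_def Xs_upd)
  also have "\<dots> = Av m T (\<lambda>c. DD \<xi> c k - (2 * s k) * ((f (Xs \<xi> c k) - f xs + \<gamma> k * hbar k (Xs \<xi> c k)) + \<mu> / 2 * DD \<xi> c k)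
       + (s k)\<^sup>2 * NN \<xi> c k + 2 * s k * \<gamma> k * hbar k xs)"
  proof -
    have "(\<Sum>j<m. \<phi> c j) / real m = DD \<xi> c k - (2 * s k) * ((f (Xs \<xi> c k) - f xs + \<gamma> k * hbar k (Xs \<xi> c k)) + \<mu> / 2 * DD \<xi> c k)
       + (s k)\<^sup>2 * NN \<xi> c k + 2 * s k * \<gamma> k * hbar k xs" for c
    proof -
      define \<alpha> where "\<alpha> = DD \<xi> c k - 2 * s k * (f (Xs \<xi> c k) - f xs + \<mu> / 2 * DD \<xi> c k) + (s k)\<^sup>2 * NN \<xi> c k"
      define \<beta> where "\<beta> = 2 * s k * \<gamma> k"
      define H where "H j = hdelta (\<delta> k) (Xs \<xi> c k) (a j) (b j)" for j
      define H' where "H' j = hdelta (\<delta> k) xs (a j) (b j)" for j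
      have "(\<Sum>j<m. \<phi> c j) = (\<Sum>j<m. \<alpha> - \<beta> * (H j - H' j))"
        by (simp add: \<phi>_def \<alpha>_def \<beta>_def H_def H'_def)
      also have "\<dots> = real m * \<alpha> - \<beta> * ((\<Sum>j<m. H j) - (\<Sum>j<m. H' j))"
        by (simp add: sum_subtractf sum_distrib_left[symmetric])
      finally have "(\<Sum>j<m. \<phi> c j) / real m = \<alpha> - \<beta> * ((\<Sum>j<m. H j) / real m - (\<Sum>j<m. H' j) / real m)"
        using m_gt0 by (simp add: field_simps)
      also have "\<dots> = \<alpha> - \<beta> * (hbar k (Xs \<xi> c k) - hbar k xs)"
        by (simp add: hbar_def H_def H'_def)
      finally show ?thesis by (simp add: \<alpha>_def \<beta>_def algebra_simps)
    qed
    then show ?thesis by simp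
  qed
  also have "\<dots> = ee \<xi> T k - 2 * s k * (ph \<xi> T k + \<mu> / 2 * ee \<xi> T k) + (s k)\<^sup>2 * nk \<xi> T k
      + 2 * s k * \<gamma> k * hbar k xs"
    unfolding ee_def ph_def nk_def by (rule Av_lin[OF m_pos])
  finally show ?thesis .
qed

end

lemma div_le_self': "0 \<le> q \<Longrightarrow> 1 \<le> r \<Longrightarrow> q / r \<le> (q::real)"
proof -
  assume q: "0 \<le> q" and r: "1 \<le> r"
  have "q * 1 \<le> q * r" using q r by (rule mult_left_mono[rotated])
  then show ?thesis using r by (simp add: divide_le_eq)
qed

lemma seq_bound:
  fixes e :: "nat \<Rightarrow> real"
  assumes A: "A \<ge> 0" and B: "\<beta> \<ge> 0" and nn: "\<And>k. 1 \<le> k \<Longrightarrow> e k \<ge> 0"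
    and rec: "\<And>k. 1 \<le> k \<Longrightarrow> k \<le> T \<Longrightarrow> e (Suc k) \<le> (1 - 2 / real k + A / (real k)\<^sup>2) * e k + \<beta> / real k"
    and k: "1 \<le> k" "k \<le> Suc T"
  shows "e k \<le> (2 + A) ^ (nat \<lceil>A\<rceil> + 1) * (e 1 + \<beta>)"
proof -
  define K0 where "K0 = nat \<lceil>A\<rceil> + 1"
  define V where "V k = (2 + A) ^ (min (k - 1) K0) * (e 1 + \<beta>)" for k
  have e1: "e 1 \<ge> 0" using nn by simp
  have Vge: "V k \<ge> e 1 + \<beta>" for k
  proof -
    have "1 \<le> (2 + A) ^ (min (k - 1) K0)" using A by (intro one_le_power) auto
    then have "1 * (e 1 + \<beta>) \<le> (2 + A) ^ (min (k - 1) K0) * (e 1 + \<beta>)" using e1 B by (intro mult_right_mono) auto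
    then show ?thesis unfolding V_def by simp
  qed
  have Vmono: "V k \<le> V (Suc k)" for k
  proof -
    have "(2 + A) ^ (min (k - 1) K0) \<le> (2 + A) ^ (min (Suc k - 1) K0)" by (rule power_increasing) (use A in auto)
    moreover have "0 \<le> e 1 + \<beta>" using e1 B by simp
    ultimately show ?thesis unfolding V_def by (rule mult_right_mono)
  qed
  have main: "1 \<le> k \<Longrightarrow> k \<le> Suc T \<Longrightarrow> e k \<le> V k" for k
  proof (induction k)
    case 0 then show ?case by simp
  next
    case (Suc k)
    show ?case
    proof (cases "k = 0")
      case True then show ?thesis using B by (simp add: V_def)
    next
      case False
      then have k1: "1 \<le> k" and kT: "k \<le> T" using Suc.prems by auto
      have IH: "e k \<le> V k" using Suc.IH k1 kT by simp
      have ek: "e k \<ge> 0" using nn k1 by simp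
      have rk: "real k \<ge> 1" using k1 by simp
      have VB: "\<beta> \<le> V k" using Vge[of k] e1 by linarith
      have R: "e (Suc k) \<le> (1 - 2 / real k + A / (real k)\<^sup>2) * e k + \<beta> / real k" using rec k1 kT by simp
      show ?thesis
      proof (cases "A \<le> real k")
        case True
        have "A / (real k)\<^sup>2 \<le> real k / (real k)\<^sup>2" using True rk by (intro divide_right_mono) auto
        also have "\<dots> = 1 / real k" using rk by (simp add: power2_eq_square)
        finally have "1 - 2 / real k + A / (real k)\<^sup>2 \<le> 1 - 1 / real k" by simp
        then have "(1 - 2 / real k + A / (real k)\<^sup>2) * e k \<le> (1 - 1 / real k) * e k" using ek by (rule mult_right_mono)
        also have "\<dots> \<le> (1 - 1 / real k) * V k" using IH rk by (intro mult_left_mono) auto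
        finally have "e (Suc k) \<le> (1 - 1 / real k) * V k + \<beta> / real k" using R by linarith
        also have "\<dots> \<le> (1 - 1 / real k) * V k + V k / real k" using VB rk by (intro add_left_mono divide_right_mono) auto
        also have "\<dots> = V k" using rk by (simp add: field_simps)
        finally show ?thesis using Vmono[of k] by simp
      next
        case False
        then have "k < K0" unfolding K0_def by linarith
        then have m1: "min (Suc k - 1) K0 = Suc (k - 1)" and m2: "min (k - 1) K0 = k - 1" using k1 by auto
        have VS: "V (Suc k) = (2 + A) * V k" unfolding V_def m1 m2 by simp
        have c1: "1 - 2 / real k + A / (real k)\<^sup>2 \<le> 1 + A"
        proof -
          have kk: "1 \<le> (real k)\<^sup>2" using one_le_power[OF rk, of 2] .
          have "A / (real k)\<^sup>2 \<le> A / 1" using A kk k1 by (intro divide_left_mono) auto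
          moreover have "0 \<le> 2 / real k" using rk by simp
          ultimately show ?thesis by linarith
        qed
        have "(1 - 2 / real k + A / (real k)\<^sup>2) * e k \<le> (1 + A) * e k" using c1 ek by (rule mult_right_mono)
        also have "\<dots> \<le> (1 + A) * V k" using IH A by (intro mult_left_mono) auto
        finally have "e (Suc k) \<le> (1 + A) * V k + \<beta> / real k" using R by linarith
        also have "\<beta> / real k \<le> \<beta>" by (rule div_le_self'[OF B rk])
        finally show ?thesis using VB VS by (simp add: algebra_simps)
      qed
    qed
  qed
  have "V k \<le> (2 + A) ^ K0 * (e 1 + \<beta>)"
    unfolding V_def using A e1 B by (intro mult_right_mono power_increasing) auto
  then show ?thesis using main[OF k] by (simp add: K0_def)
qed

context pen begin

lemma ee_nonneg: "ee \<xi> T k \<ge> 0" unfolding ee_def DD_def by (intro Av_nonneg) auto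

lemma hk_nonneg: "k \<ge> 1 \<Longrightarrow> hk \<xi> T k \<ge> 0" unfolding hk_def by (intro Av_nonneg hbar_nonneg)

lemma ee_1: "ee \<xi> T 1 = (norm (\<xi> - xs))\<^sup>2"
  unfolding ee_def DD_def by (simp add: Av_const[OF m_pos])

definition G2 where "G2 = (norm (sg xs))\<^sup>2"

lemma ph_lower: "k \<ge> 1 \<Longrightarrow> ph \<xi> T k \<ge> - (G2 / (2 * \<mu>))"
proof -
  assume k: "k \<ge> 1"
  have pw: "f x - f xs + \<gamma> k * hbar k x \<ge> - (G2 / (2 * \<mu>))" for x
  proof -
    define r where "r = norm (x - xs)"
    define G where "G = norm (sg xs)"
    have "f x \<ge> f xs + inner (sg xs) (x - xs) + \<mu> / 2 * r\<^sup>2" unfolding r_def by (rule sub_ineq)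
    moreover have "inner (sg xs) (x - xs) \<ge> - (G * r)"
    proof -
      have "inner (sg xs) (xs - x) \<le> norm (sg xs) * norm (xs - x)" by (rule norm_cauchy_schwarz)
      moreover have "inner (sg xs) (xs - x) = - inner (sg xs) (x - xs)" by (simp add: inner_diff_right)
      moreover have "norm (xs - x) = norm (x - xs)" by (rule norm_minus_commute)
      ultimately show ?thesis by (simp add: G_def r_def)
    qed
    moreover have "\<mu> / 2 * r\<^sup>2 - G * r \<ge> - (G2 / (2 * \<mu>))"
    proof -
      have "0 \<le> (\<mu> * r - G)\<^sup>2 / (2 * \<mu>)" using mu_pos by simp
      also have "(\<mu> * r - G)\<^sup>2 / (2 * \<mu>) = \<mu> / 2 * r\<^sup>2 - G * r + G2 / (2 * \<mu>)"
        using mu_pos by (simp add: G2_def G_def field_simps power2_eq_square)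
      finally show ?thesis by simp
    qed
    moreover have "\<gamma> k * hbar k x \<ge> 0" using gamma_nonneg hbar_nonneg[OF k] by simp
    ultimately show ?thesis by linarith
  qed
  have "Av m T (\<lambda>c. - (G2 / (2 * \<mu>))) \<le> ph \<xi> T k"
    unfolding ph_def by (rule Av_mono) (rule pw)
  then show ?thesis by (simp add: Av_const[OF m_pos])
qed

lemma ph_pen: "k \<ge> 1 \<Longrightarrow> ph \<xi> T k \<ge> (\<gamma> k - Lam') * hk \<xi> T k"
proof -
  assume k: "k \<ge> 1"
  have "Av m T (\<lambda>c. (\<gamma> k - Lam') * hbar k (Xs \<xi> c k)) \<le> ph \<xi> T k"
    unfolding ph_def
  proof (rule Av_mono)
    fix c
    show "(\<gamma> k - Lam') * hbar k (Xs \<xi> c k) \<le> f (Xs \<xi> c k) - f xs + \<gamma> k * hbar k (Xs \<xi> c k)"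
      using penalty_hbar[OF k, of "Xs \<xi> c k"] by (simp add: algebra_simps)
  qed
  then show ?thesis by (simp add: Av_cmult hk_def)
qed

definition Yc where "Yc = 6 * M1\<^sup>2 * (norm xs)\<^sup>2 + 3 * M2\<^sup>2"

lemma Yc_nonneg: "Yc \<ge> 0" by (simp add: Yc_def)

lemma nk_upper: "nk \<xi> T k \<le> 6 * M1\<^sup>2 * ee \<xi> T k + Yc + 3 * (\<gamma> k)\<^sup>2"
proof -
  have pw: "NN \<xi> c k \<le> 6 * M1\<^sup>2 * DD \<xi> c k + (Yc + 3 * (\<gamma> k)\<^sup>2)" for c
  proof -
    define x where "x = Xs \<xi> c k"
    have sq3: "(p + q + r)\<^sup>2 \<le> 3 * (p\<^sup>2 + q\<^sup>2 + r\<^sup>2)" for p q r :: real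
    proof -
      have "0 \<le> (p - q)\<^sup>2 + (q - r)\<^sup>2 + (p - r)\<^sup>2" by simp
      then show ?thesis by (simp add: power2_eq_square algebra_simps)
    qed
    have sq2: "(p + q)\<^sup>2 \<le> 2 * (p\<^sup>2 + q\<^sup>2)" for p q :: real
    proof -
      have "0 \<le> (p - q)\<^sup>2" by simp
      then show ?thesis by (simp add: power2_eq_square algebra_simps)
    qed
    have "norm x \<le> norm (x - xs) + norm xs" by (metis norm_triangle_sub add.commute)
    then have "(norm x)\<^sup>2 \<le> (norm (x - xs) + norm xs)\<^sup>2" by (intro power_mono) auto
    also have "\<dots> \<le> 2 * ((norm (x - xs))\<^sup>2 + (norm xs)\<^sup>2)" by (rule sq2)
    finally have nx: "(norm x)\<^sup>2 \<le> 2 * ((norm (x - xs))\<^sup>2 + (norm xs)\<^sup>2)" .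
    have "NN \<xi> c k \<le> 3 * ((M1 * norm x)\<^sup>2 + M2\<^sup>2 + (\<gamma> k)\<^sup>2)" unfolding NN_def x_def by (rule sq3)
    also have "(M1 * norm x)\<^sup>2 = M1\<^sup>2 * (norm x)\<^sup>2" by (simp add: power_mult_distrib)
    also have "M1\<^sup>2 * (norm x)\<^sup>2 \<le> M1\<^sup>2 * (2 * ((norm (x - xs))\<^sup>2 + (norm xs)\<^sup>2))" using nx by (intro mult_left_mono) auto
    finally show ?thesis by (simp add: DD_def x_def Yc_def algebra_simps)
  qed
  have "nk \<xi> T k \<le> Av m T (\<lambda>c. 6 * M1\<^sup>2 * DD \<xi> c k + (Yc + 3 * (\<gamma> k)\<^sup>2))"
    unfolding nk_def by (rule Av_mono) (rule pw)
  also have "\<dots> = 6 * M1\<^sup>2 * ee \<xi> T k + (Yc + 3 * (\<gamma> k)\<^sup>2)"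
    by (simp add: Av_add Av_cmult Av_const[OF m_pos] ee_def)
  finally show ?thesis by simp
qed

lemma hk_upper: "k \<ge> 1 \<Longrightarrow> hk \<xi> T k \<le> 1 + ee \<xi> T k + norm xs + Cb"
proof -
  assume k: "k \<ge> 1"
  have "hk \<xi> T k \<le> Av m T (\<lambda>c. DD \<xi> c k + (1 + norm xs + Cb))"
    unfolding hk_def
  proof (rule Av_mono)
    fix c
    define x where "x = Xs \<xi> c k"
    have "norm x \<le> norm (x - xs) + norm xs" by (metis norm_triangle_sub add.commute)
    moreover have "norm (x - xs) \<le> 1 + (norm (x - xs))\<^sup>2" by (rule le_1_sq)
    ultimately show "hbar k (Xs \<xi> c k) \<le> DD \<xi> c k + (1 + norm xs + Cb)"
      using hbar_le[OF k, of x] unfolding DD_def x_def by linarith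
  qed
  also have "\<dots> = ee \<xi> T k + (1 + norm xs + Cb)" by (simp add: Av_add Av_const[OF m_pos] ee_def)
  finally show ?thesis by simp
qed

definition Acoef where "Acoef = 24 * M1\<^sup>2 / \<mu>\<^sup>2"
definition \<beta>c where "\<beta>c = 2 * G2 / \<mu>\<^sup>2 + 4 * Yc / \<mu>\<^sup>2 + 12 * C2 / \<mu>\<^sup>2 + 4 * A0 * (1 + C2) / \<mu>"

lemma Acoef_nonneg: "Acoef \<ge> 0" by (simp add: Acoef_def)
lemma \<beta>c_nonneg: "\<beta>c \<ge> 0"
  unfolding \<beta>c_def using Yc_nonneg C2_nonneg A0_nonneg mu_pos by (simp add: G2_def)

lemma e_rec:
  assumes k: "1 \<le> k" "k \<le> T"
  shows "ee \<xi> T (Suc k) \<le> (1 - 2 / real k + Acoef / (real k)\<^sup>2) * ee \<xi> T k + \<beta>c / real k"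
proof -
  define e where "e = ee \<xi> T k"
  define e' where "e' = ee \<xi> T (Suc k)"
  define p where "p = ph \<xi> T k"
  define n where "n = nk \<xi> T k"
  define sk where "sk = s k"
  define gk where "gk = \<gamma> k"
  define r where "r = real k"
  have r1: "r \<ge> 1" using k by (simp add: r_def)
  have sk: "sk = 2 / (\<mu> * r)" by (simp add: sk_def r_def s_def)
  have skp: "sk > 0" using s_pos[OF k(1)] by (simp add: sk_def)
  have H0: "e' \<le> e - 2 * sk * (p + \<mu> / 2 * e) + sk\<^sup>2 * n + 2 * sk * gk * hbar k xs"
    using avg_step[OF k, of \<xi>] by (simp add: e_def e'_def p_def n_def sk_def gk_def)
  have Ha: "- (2 * sk * p) \<le> sk * G2 / \<mu>"
  proof -
    have "2 * sk * (- (G2 / (2 * \<mu>))) \<le> 2 * sk * p" using ph_lower[OF k(1)] skp by (intro mult_left_mono) (auto simp: p_def)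
    then show ?thesis using mu_pos by (simp add: field_simps)
  qed
  have Hb: "sk\<^sup>2 * n \<le> sk\<^sup>2 * (6 * M1\<^sup>2 * e + Yc + 3 * gk\<^sup>2)"
    using nk_upper by (intro mult_left_mono) (auto simp: n_def e_def gk_def)
  have Hb2: "sk\<^sup>2 * (3 * gk\<^sup>2) \<le> sk\<^sup>2 * (3 * (C2 * r))"
    using gamma_sq_bound[OF k(1)] by (intro mult_left_mono) (auto simp: gk_def C2_def r_def)
  have Hc: "2 * sk * gk * hbar k xs \<le> 2 * sk * A0 * (1 + C2)"
  proof -
    have "2 * sk * gk * hbar k xs \<le> 2 * sk * gk * (\<delta> k * A0)"
      using hbar_xs[OF k(1)] skp gamma_nonneg[of k] by (intro mult_left_mono) (auto simp: gk_def)
    also have "\<dots> = 2 * sk * A0 * (gk * \<delta> k)" by (simp add: algebra_simps)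
    also have "\<dots> \<le> 2 * sk * A0 * (1 + C2)"
      using gamma_delta[OF k(1)] skp A0_nonneg by (intro mult_left_mono) (auto simp: gk_def)
    finally show ?thesis .
  qed
  have E1: "2 * sk * (p + \<mu> / 2 * e) = 2 * sk * p + (\<mu> * sk) * e" by (simp add: algebra_simps)
  have E2: "sk\<^sup>2 * (6 * M1\<^sup>2 * e + Yc + 3 * gk\<^sup>2) = (6 * M1\<^sup>2 * sk\<^sup>2) * e + sk\<^sup>2 * Yc + sk\<^sup>2 * (3 * gk\<^sup>2)"
    by (simp add: algebra_simps)
  have S1: "e' \<le> e - (\<mu> * sk) * e + (6 * M1\<^sup>2 * sk\<^sup>2) * e + sk * G2 / \<mu> + sk\<^sup>2 * Yc + sk\<^sup>2 * (3 * (C2 * r)) + 2 * sk * A0 * (1 + C2)"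
    using H0 Ha Hb Hb2 Hc E1 E2 by linarith
  have I1: "\<mu> * sk = 2 / r" using mu_pos r1 by (simp add: sk field_simps)
  have I2: "6 * M1\<^sup>2 * sk\<^sup>2 = Acoef / r\<^sup>2" using mu_pos r1 by (simp add: sk Acoef_def field_simps power2_eq_square)
  have I3: "sk * G2 / \<mu> = (2 * G2 / \<mu>\<^sup>2) / r" using mu_pos r1 by (simp add: sk field_simps power2_eq_square)
  have I4: "sk\<^sup>2 * Yc \<le> (4 * Yc / \<mu>\<^sup>2) / r"
  proof -
    have "sk\<^sup>2 * Yc = (4 * Yc / \<mu>\<^sup>2) / r / r" using mu_pos r1 by (simp add: sk field_simps power2_eq_square)
    also have "\<dots> \<le> (4 * Yc / \<mu>\<^sup>2) / r" using r1 Yc_nonneg mu_pos by (intro div_le_self') auto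
    finally show ?thesis .
  qed
  have I5: "sk\<^sup>2 * (3 * (C2 * r)) = (12 * C2 / \<mu>\<^sup>2) / r" using mu_pos r1 by (simp add: sk field_simps power2_eq_square)
  have I6: "2 * sk * A0 * (1 + C2) = (4 * A0 * (1 + C2) / \<mu>) / r" using mu_pos r1 by (simp add: sk field_simps)
  have F: "(1 - 2 / r + Acoef / r\<^sup>2) * e + \<beta>c / r
      = e - (2 / r) * e + (Acoef / r\<^sup>2) * e + ((2 * G2 / \<mu>\<^sup>2) / r + (4 * Yc / \<mu>\<^sup>2) / r + (12 * C2 / \<mu>\<^sup>2) / r + (4 * A0 * (1 + C2) / \<mu>) / r)"
    by (simp add: \<beta>c_def algebra_simps add_divide_distrib)
  have "e' \<le> (1 - 2 / r + Acoef / r\<^sup>2) * e + \<beta>c / r"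
  proof -
    have I1': "\<mu> * sk * e = 2 / r * e" using I1 by simp
    have I2': "6 * M1\<^sup>2 * sk\<^sup>2 * e = Acoef / r\<^sup>2 * e" using I2 by simp
    have S2: "e' \<le> e - 2 / r * e + Acoef / r\<^sup>2 * e + 2 * G2 / \<mu>\<^sup>2 / r + sk\<^sup>2 * Yc + 12 * C2 / \<mu>\<^sup>2 / r + 4 * A0 * (1 + C2) / \<mu> / r"
      using S1 unfolding I1' I2' I3 I5 I6 .
    show ?thesis unfolding F using S2 I4 by linarith
  qed
  then show ?thesis by (simp add: e_def e'_def r_def)
qed

definition KE where "KE = (2 + Acoef) ^ (nat \<lceil>Acoef\<rceil> + 1) * (2 + 2 * (norm xs)\<^sup>2 + \<beta>c)"

lemma KE_nonneg: "KE \<ge> 0"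
  unfolding KE_def using Acoef_nonneg \<beta>c_nonneg by (intro mult_nonneg_nonneg) auto

lemma ee_bound: "1 \<le> k \<Longrightarrow> k \<le> Suc T \<Longrightarrow> ee \<xi> T k \<le> KE * (1 + (norm \<xi>)\<^sup>2)"
proof -
  assume k: "1 \<le> k" "k \<le> Suc T"
  have "ee \<xi> T k \<le> (2 + Acoef) ^ (nat \<lceil>Acoef\<rceil> + 1) * (ee \<xi> T 1 + \<beta>c)"
    by (rule seq_bound[OF Acoef_nonneg \<beta>c_nonneg _ e_rec k]) (rule ee_nonneg)
  also have "ee \<xi> T 1 + \<beta>c \<le> (2 + 2 * (norm xs)\<^sup>2 + \<beta>c) * (1 + (norm \<xi>)\<^sup>2)"
  proof -
    have "norm (\<xi> - xs) \<le> norm \<xi> + norm xs" by (rule norm_triangle_ineq4)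
    then have "(norm (\<xi> - xs))\<^sup>2 \<le> (norm \<xi> + norm xs)\<^sup>2" by (intro power_mono) auto
    also have "\<dots> \<le> 2 * (norm \<xi>)\<^sup>2 + 2 * (norm xs)\<^sup>2"
    proof -
      have "0 \<le> (norm \<xi> - norm xs)\<^sup>2" by simp
      then show ?thesis by (simp add: power2_eq_square algebra_simps)
    qed
    finally have a0: "(norm (\<xi> - xs))\<^sup>2 \<le> 2 * (norm \<xi>)\<^sup>2 + 2 * (norm xs)\<^sup>2" .
    have a1: "ee \<xi> T 1 \<le> 2 * (norm \<xi>)\<^sup>2 + 2 * (norm xs)\<^sup>2" unfolding ee_1 by (rule a0)
    have "(2 + 2 * (norm xs)\<^sup>2 + \<beta>c) * (1 + (norm \<xi>)\<^sup>2) = 2 + 2 * (norm xs)\<^sup>2 + \<beta>c + 2 * (norm \<xi>)\<^sup>2 + (2 * (norm xs)\<^sup>2 + \<beta>c) * (norm \<xi>)\<^sup>2"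
      by (simp add: algebra_simps)
    moreover have "(2 * (norm xs)\<^sup>2 + \<beta>c) * (norm \<xi>)\<^sup>2 \<ge> 0" using \<beta>c_nonneg by simp
    ultimately show ?thesis using a1 by linarith
  qed
  then have "(2 + Acoef) ^ (nat \<lceil>Acoef\<rceil> + 1) * (ee \<xi> T 1 + \<beta>c) \<le> (2 + Acoef) ^ (nat \<lceil>Acoef\<rceil> + 1) * ((2 + 2 * (norm xs)\<^sup>2 + \<beta>c) * (1 + (norm \<xi>)\<^sup>2))"
    using Acoef_nonneg by (intro mult_left_mono) auto
  finally show ?thesis by (simp add: KE_def mult.assoc)
qed

end

lemma sum_id_lower: "(\<Sum>k=1..T. real k) \<ge> (real T)\<^sup>2 / 2"
proof (induction T)
  case 0 then show ?case by simp
next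
  case (Suc T)
  have "(real (Suc T))\<^sup>2 / 2 = (real T)\<^sup>2 / 2 + real T + 1 / 2" by (simp add: power2_eq_square field_simps)
  also have "\<dots> \<le> (\<Sum>k=1..T. real k) + real (Suc T)" using Suc by simp
  finally show ?case by simp
qed

lemma frac_bound:
  fixes X W T Kc Z L \<mu> :: real
  assumes "0 \<le> X" "X \<le> T * Kc * Z * L" "W \<ge> \<mu> * T\<^sup>2 / 4" "T > 0" "\<mu> > 0"
  shows "X / W \<le> (4 * Kc / \<mu>) * Z * (L / T)"
proof -
  have p: "0 < \<mu> * T\<^sup>2 / 4" using assms by simp
  have Wp: "W > 0" using p assms(3) by linarith
  have "0 < W * (\<mu> * T\<^sup>2 / 4)" using Wp p by (rule mult_pos_pos)
  then have "X / W \<le> X / (\<mu> * T\<^sup>2 / 4)" using assms by (intro divide_left_mono) auto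
  also have "\<dots> \<le> (T * Kc * Z * L) / (\<mu> * T\<^sup>2 / 4)" using assms p by (intro divide_right_mono) auto
  also have "\<dots> = (4 * Kc / \<mu>) * Z * (L / T)" using assms by (simp add: field_simps power2_eq_square)
  finally show ?thesis .
qed

context pen begin

definition W where "W T = (\<Sum>k=1..T. 1 / s k)"
definition xbar where "xbar \<xi> c T = (1 / W T) *\<^sub>R (\<Sum>k=1..T. (1 / s k) *\<^sub>R Xs \<xi> c k)"

lemma w_eq: "k \<ge> 1 \<Longrightarrow> 1 / s k = \<mu> * real k / 2"
  by (simp add: s_def)

lemma w_pos: "k \<ge> 1 \<Longrightarrow> 1 / s k > 0" using s_pos by simp

lemma W_lower: "W T \<ge> \<mu> * (real T)\<^sup>2 / 4"
proof -
  have "W T = (\<Sum>k=1..T. \<mu> / 2 * real k)" unfolding W_def by (intro sum.cong) (auto simp: w_eq)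
  also have "\<dots> = \<mu> / 2 * (\<Sum>k=1..T. real k)" by (simp add: sum_distrib_left)
  finally have "W T = \<mu> / 2 * (\<Sum>k=1..T. real k)" .
  moreover have "\<mu> / 2 * ((real T)\<^sup>2 / 2) \<le> \<mu> / 2 * (\<Sum>k=1..T. real k)"
    using sum_id_lower[of T] mu_pos by (intro mult_left_mono) auto
  ultimately show ?thesis by simp
qed

lemma W_pos: "T \<ge> 1 \<Longrightarrow> W T > 0"
  unfolding W_def using w_pos by (intro sum_pos) auto

lemma main_sum:
  assumes "n \<le> T"
  shows "(\<Sum>k=1..n. (1 / s k) * ph \<xi> T k)
     \<le> (\<Sum>k=1..n. nk \<xi> T k / 2 + (1 / s k) * \<gamma> k * \<delta> k * A0) - \<mu>\<^sup>2 * (real n)\<^sup>2 / 8 * ee \<xi> T (Suc n)"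
  using assms
proof (induction n)
  case 0 then show ?case by simp
next
  case (Suc n)
  define k where "k = Suc n"
  have k: "1 \<le> k" "k \<le> T" using Suc.prems by (auto simp: k_def)
  define e where "e = ee \<xi> T k"
  define e' where "e' = ee \<xi> T (Suc k)"
  define p where "p = ph \<xi> T k"
  define nn where "nn = nk \<xi> T k"
  define sk where "sk = s k"
  define gk where "gk = \<gamma> k"
  define h where "h = hbar k xs"
  define r where "r = real k"
  define w where "w = 1 / s k"
  define c where "c = \<mu>\<^sup>2 * r\<^sup>2 / 8"
  have r1: "r \<ge> 1" using k by (simp add: r_def)
  have sk: "sk = 2 / (\<mu> * r)" by (simp add: sk_def r_def s_def)
  have w: "w = \<mu> * r / 2" using w_eq[OF k(1)] by (simp add: w_def r_def)
  have cpos: "c > 0" using mu_pos r1 by (simp add: c_def)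
  have H0: "e' \<le> e - 2 * sk * (p + \<mu> / 2 * e) + sk\<^sup>2 * nn + 2 * sk * gk * h"
    using avg_step[OF k, of \<xi>] by (simp add: e_def e'_def p_def nn_def sk_def gk_def h_def)
  have "c * e' \<le> c * (e - 2 * sk * (p + \<mu> / 2 * e) + sk\<^sup>2 * nn + 2 * sk * gk * h)"
    using H0 cpos by (intro mult_left_mono) auto
  also have "\<dots> = c * e - w * p - (\<mu>\<^sup>2 * r / 4) * e + nn / 2 + w * gk * h"
    using mu_pos r1 by (simp add: c_def sk w field_simps power2_eq_square)
  finally have A1: "w * p \<le> c * e - (\<mu>\<^sup>2 * r / 4) * e - c * e' + nn / 2 + w * gk * h" by simp
  have A2: "c * e - (\<mu>\<^sup>2 * r / 4) * e \<le> \<mu>\<^sup>2 * (real n)\<^sup>2 / 8 * e"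
  proof -
    have "\<mu>\<^sup>2 * (real n)\<^sup>2 / 8 - (c - \<mu>\<^sup>2 * r / 4) = \<mu>\<^sup>2 / 8"
      by (simp add: c_def r_def k_def field_simps power2_eq_square)
    then have "c - \<mu>\<^sup>2 * r / 4 \<le> \<mu>\<^sup>2 * (real n)\<^sup>2 / 8" by (smt (verit) zero_le_power2 divide_nonneg_pos)
    then have "(c - \<mu>\<^sup>2 * r / 4) * e \<le> \<mu>\<^sup>2 * (real n)\<^sup>2 / 8 * e" using ee_nonneg by (intro mult_right_mono) (auto simp: e_def)
    then show ?thesis by (simp add: algebra_simps)
  qed
  have A3': "w * gk * h \<le> w * gk * (\<delta> k * A0)"
    using hbar_xs[OF k(1)] w_pos[OF k(1)] gamma_nonneg[of k] by (intro mult_left_mono) (auto simp: w_def gk_def h_def)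
  have A3: "w * gk * h \<le> w * gk * \<delta> k * A0" using A3' by (simp add: mult.assoc)
  have A4: "c * e' = \<mu>\<^sup>2 * (real (Suc n))\<^sup>2 / 8 * e'" by (simp add: c_def r_def k_def)
  have step: "w * p \<le> \<mu>\<^sup>2 * (real n)\<^sup>2 / 8 * e - \<mu>\<^sup>2 * (real (Suc n))\<^sup>2 / 8 * e' + (nn / 2 + w * gk * \<delta> k * A0)"
    using A1 A2 A3 A4 by linarith
  have IH: "(\<Sum>k=1..n. (1 / s k) * ph \<xi> T k)
     \<le> (\<Sum>k=1..n. nk \<xi> T k / 2 + (1 / s k) * \<gamma> k * \<delta> k * A0) - \<mu>\<^sup>2 * (real n)\<^sup>2 / 8 * e"
    using Suc by (simp add: e_def k_def)
  have S1: "(\<Sum>k=1..Suc n. (1 / s k) * ph \<xi> T k) = (\<Sum>k=1..n. (1 / s k) * ph \<xi> T k) + w * p"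
    by (simp add: w_def p_def k_def)
  have S2: "(\<Sum>k=1..Suc n. nk \<xi> T k / 2 + (1 / s k) * \<gamma> k * \<delta> k * A0)
     = (\<Sum>k=1..n. nk \<xi> T k / 2 + (1 / s k) * \<gamma> k * \<delta> k * A0) + (nn / 2 + w * gk * \<delta> k * A0)"
    by (simp add: w_def nn_def gk_def k_def)
  have S3: "ee \<xi> T (Suc (Suc n)) = e'" by (simp add: e'_def k_def)
  show ?case unfolding S1 S2 S3 using IH step by linarith
qed

lemma Q_convex: "convex_on UNIV Q"
proof (rule convex_onI)
  fix t :: real and x y :: 'a
  assume t: "0 < t" "t < 1"
  have each: "max 0 (inner (a j) ((1 - t) *\<^sub>R x + t *\<^sub>R y) - b j)
      \<le> (1 - t) * max 0 (inner (a j) x - b j) + t * max 0 (inner (a j) y - b j)" for j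
  proof -
    have e: "inner (a j) ((1 - t) *\<^sub>R x + t *\<^sub>R y) - b j = (1 - t) * (inner (a j) x - b j) + t * (inner (a j) y - b j)"
      by (simp add: inner_add_right algebra_simps)
    have "(1 - t) * (inner (a j) x - b j) \<le> (1 - t) * max 0 (inner (a j) x - b j)" using t by (intro mult_left_mono) auto
    moreover have "t * (inner (a j) y - b j) \<le> t * max 0 (inner (a j) y - b j)" using t by (intro mult_left_mono) auto
    moreover have "0 \<le> (1 - t) * max 0 (inner (a j) x - b j)" "0 \<le> t * max 0 (inner (a j) y - b j)" using t by auto
    ultimately show ?thesis unfolding e by linarith
  qed
  have "Q ((1 - t) *\<^sub>R x + t *\<^sub>R y) \<le> (\<Sum>j<m. (1 - t) * max 0 (inner (a j) x - b j) + t * max 0 (inner (a j) y - b j))"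
    unfolding Q_def by (intro sum_mono each)
  also have "\<dots> = (1 - t) * Q x + t * Q y" by (simp add: Q_def sum.distrib sum_distrib_left)
  finally show "Q ((1 - t) *\<^sub>R x + t *\<^sub>R y) \<le> (1 - t) * Q x + t * Q y" .
qed auto

lemma xbar_eq: "xbar \<xi> c T = (\<Sum>k=1..T. (1 / s k / W T) *\<^sub>R Xs \<xi> c k)"
  unfolding xbar_def scaleR_sum_right scaleR_scaleR by (intro sum.cong refl) (simp add: ac_simps)

lemma weights: "T \<ge> 1 \<Longrightarrow> (\<Sum>k=1..T. 1 / s k / W T) = 1"
proof -
  assume T: "T \<ge> 1"
  have "(\<Sum>k=1..T. 1 / s k / W T) = (\<Sum>k=1..T. 1 / s k) / W T" by (rule sum_divide_distrib[symmetric])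
  also have "(\<Sum>k=1..T. 1 / s k) = W T" by (simp add: W_def)
  finally show ?thesis using W_pos[OF T] by simp
qed

lemma upper:
  assumes T: "T \<ge> 1"
  shows "Av m T (\<lambda>c. f (xbar \<xi> c T)) - f xs \<le> (\<Sum>k=1..T. (1 / s k) * ph \<xi> T k) / W T"
proof -
  have wn: "\<And>k. k \<in> {1..T} \<Longrightarrow> 0 \<le> 1 / s k / W T" using w_pos W_pos[OF T] by (auto intro: divide_nonneg_pos less_imp_le)
  have "Av m T (\<lambda>c. f (xbar \<xi> c T)) \<le> Av m T (\<lambda>c. \<Sum>k=1..T. (1 / s k / W T) * f (Xs \<xi> c k))"
  proof (rule Av_mono)
    fix c
    show "f (xbar \<xi> c T) \<le> (\<Sum>k=1..T. (1 / s k / W T) * f (Xs \<xi> c k))"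
      unfolding xbar_eq using T wn weights[OF T] by (intro convex_on_sum[OF _ _ f_convex]) auto
  qed
  also have "\<dots> = (\<Sum>k=1..T. (1 / s k / W T) * Av m T (\<lambda>c. f (Xs \<xi> c k)))"
    by (simp only: Av_sum[OF finite_atLeastAtMost] Av_cmult)
  also have "\<dots> \<le> (\<Sum>k=1..T. (1 / s k / W T) * (ph \<xi> T k + f xs))"
  proof (intro sum_mono mult_left_mono)
    fix k assume k: "k \<in> {1..T}"
    have "Av m T (\<lambda>c. f (Xs \<xi> c k)) \<le> Av m T (\<lambda>c. (f (Xs \<xi> c k) - f xs + \<gamma> k * hbar k (Xs \<xi> c k)) + f xs)"
      using k gamma_nonneg[of k] hbar_nonneg by (intro Av_mono) auto
    also have "\<dots> = ph \<xi> T k + f xs" by (subst Av_add) (simp only: Av_const[OF m_pos] ph_def)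
    finally show "Av m T (\<lambda>c. f (Xs \<xi> c k)) \<le> ph \<xi> T k + f xs" .
    show "0 \<le> 1 / s k / W T" using wn k .
  qed
  also have "\<dots> = (\<Sum>k=1..T. (1 / s k) * ph \<xi> T k) / W T + f xs * (\<Sum>k=1..T. 1 / s k / W T)"
    by (simp add: distrib_left sum.distrib sum_divide_distrib sum_distrib_left algebra_simps)
  also have "\<dots> = (\<Sum>k=1..T. (1 / s k) * ph \<xi> T k) / W T + f xs" using weights[OF T] by simp
  finally show ?thesis by simp
qed

lemma lower:
  assumes T: "T \<ge> 1"
  shows "f xs - Av m T (\<lambda>c. f (xbar \<xi> c T)) \<le> Lam' * (\<Sum>k=1..T. (1 / s k) * hk \<xi> T k) / W T"
proof -
  have wn: "\<And>k. k \<in> {1..T} \<Longrightarrow> 0 \<le> 1 / s k / W T" using w_pos W_pos[OF T] by (auto intro: divide_nonneg_pos less_imp_le)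
  have "Av m T (\<lambda>c. f xs) \<le> Av m T (\<lambda>c. f (xbar \<xi> c T) + Lam' * (\<Sum>k=1..T. (1 / s k / W T) * hbar k (Xs \<xi> c k)))"
  proof (rule Av_mono)
    fix c
    have "Q (xbar \<xi> c T) \<le> (\<Sum>k=1..T. (1 / s k / W T) * Q (Xs \<xi> c k))"
      unfolding xbar_eq using T wn weights[OF T] by (intro convex_on_sum[OF _ _ Q_convex]) auto
    also have "\<dots> \<le> (\<Sum>k=1..T. (1 / s k / W T) * (Amx * hbar k (Xs \<xi> c k)))"
      using wn Q_hbar by (intro sum_mono mult_left_mono) auto
    finally have q: "Q (xbar \<xi> c T) \<le> Amx * (\<Sum>k=1..T. (1 / s k / W T) * hbar k (Xs \<xi> c k))"
      by (simp add: sum_distrib_left algebra_simps)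
    have "f xs \<le> f (xbar \<xi> c T) + Lam * Q (xbar \<xi> c T)" by (rule Lam(2))
    also have "\<dots> \<le> f (xbar \<xi> c T) + Lam * (Amx * (\<Sum>k=1..T. (1 / s k / W T) * hbar k (Xs \<xi> c k)))"
      using q Lam(1) by (intro add_left_mono mult_left_mono) auto
    finally show "f xs \<le> f (xbar \<xi> c T) + Lam' * (\<Sum>k=1..T. (1 / s k / W T) * hbar k (Xs \<xi> c k))"
      by (simp add: Lam'_def mult.assoc)
  qed
  also have "\<dots> = Av m T (\<lambda>c. f (xbar \<xi> c T)) + Lam' * (\<Sum>k=1..T. (1 / s k / W T) * hk \<xi> T k)"
    by (simp only: Av_add Av_cmult Av_sum[OF finite_atLeastAtMost] hk_def)
  also have "(\<Sum>k=1..T. (1 / s k / W T) * hk \<xi> T k) = (\<Sum>k=1..T. (1 / s k) * hk \<xi> T k) / W T"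
    by (simp add: sum_divide_distrib)
  finally show ?thesis by (simp add: Av_const[OF m_pos])
qed

end

context pen begin

definition k1 where "k1 = nat \<lceil>exp ((Lam' + 1) powr (1 / g))\<rceil> + 1"

lemma gamma_big: "k \<ge> k1 \<Longrightarrow> \<gamma> k \<ge> Lam' + 1"
proof -
  assume k: "k \<ge> k1"
  define L where "L = Lam' + 1"
  have L1: "L \<ge> 1" using Lam'_nonneg by (simp add: L_def)
  have "exp (L powr (1 / g)) \<le> real (nat \<lceil>exp (L powr (1 / g))\<rceil>)" by linarith
  also have "\<dots> \<le> real k" using k unfolding k1_def L_def by simp
  finally have e: "exp (L powr (1 / g)) \<le> real k" .
  have kp: "0 < real k" using k by (simp add: k1_def)
  have "L powr (1 / g) \<le> ln (real k)" using e kp by (simp add: ln_ge_iff)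
  then have "(L powr (1 / g)) powr g \<le> ln (real k) powr g" using g by (intro powr_mono2) auto
  also have "(L powr (1 / g)) powr g = L" using g L1 by (simp add: powr_powr)
  finally show ?thesis by (simp add: gamma_def L_def)
qed

definition Cst where "Cst \<xi> = (Lam' + 1) * (\<mu> * real k1 / 2) * (1 + KE * (1 + (norm \<xi>)\<^sup>2) + norm xs + Cb)"

lemma Cst_nonneg: "Cst \<xi> \<ge> 0"
  unfolding Cst_def using Lam'_nonneg mu_pos KE_nonneg Cb_nonneg by (intro mult_nonneg_nonneg) auto

lemma sum_hk:
  assumes T: "T \<ge> 1"
  shows "(\<Sum>k=1..T. (1 / s k) * hk \<xi> T k) \<le> (\<Sum>k=1..T. (1 / s k) * ph \<xi> T k) + real k1 * Cst \<xi>"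
proof -
  have each: "(1 / s k) * hk \<xi> T k \<le> (1 / s k) * ph \<xi> T k + (if k < k1 then Cst \<xi> else 0)" if k: "k \<in> {1..T}" for k
  proof -
    have k1': "k \<ge> 1" using k by simp
    have wp: "1 / s k > 0" using w_pos[OF k1'] .
    have hk0: "hk \<xi> T k \<ge> 0" using hk_nonneg[OF k1'] .
    have pp: "ph \<xi> T k \<ge> (\<gamma> k - Lam') * hk \<xi> T k" using ph_pen[OF k1'] .
    show ?thesis
    proof (cases "k < k1")
      case False
      then have "\<gamma> k - Lam' \<ge> 1" using gamma_big[of k] by simp
      then have "1 * hk \<xi> T k \<le> (\<gamma> k - Lam') * hk \<xi> T k" using hk0 by (intro mult_right_mono) auto
      then have "hk \<xi> T k \<le> ph \<xi> T k" using pp by simp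
      then have "(1 / s k) * hk \<xi> T k \<le> (1 / s k) * ph \<xi> T k" using wp by (intro mult_left_mono) auto
      then show ?thesis using False by simp
    next
      case True
      have "\<gamma> k * hk \<xi> T k \<ge> 0" using gamma_nonneg hk0 by simp
      then have h1: "hk \<xi> T k \<le> ph \<xi> T k + (Lam' + 1) * hk \<xi> T k" using pp by (simp add: algebra_simps)
      have "hk \<xi> T k \<le> 1 + ee \<xi> T k + norm xs + Cb" by (rule hk_upper[OF k1'])
      also have "ee \<xi> T k \<le> KE * (1 + (norm \<xi>)\<^sup>2)" using k by (intro ee_bound) auto
      finally have h2: "hk \<xi> T k \<le> 1 + KE * (1 + (norm \<xi>)\<^sup>2) + norm xs + Cb" by simp
      have w1: "1 / s k \<le> \<mu> * real k1 / 2" using w_eq[OF k1'] True mu_pos by simp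
      have "(1 / s k) * ((Lam' + 1) * hk \<xi> T k) \<le> (\<mu> * real k1 / 2) * ((Lam' + 1) * (1 + KE * (1 + (norm \<xi>)\<^sup>2) + norm xs + Cb))"
        using w1 h2 wp hk0 Lam'_nonneg mu_pos by (intro mult_mono) auto
      moreover have "(\<mu> * real k1 / 2) * ((Lam' + 1) * (1 + KE * (1 + (norm \<xi>)\<^sup>2) + norm xs + Cb)) = Cst \<xi>"
        unfolding Cst_def by (simp only: mult.assoc mult.commute mult.left_commute)
      ultimately have "(1 / s k) * ((Lam' + 1) * hk \<xi> T k) \<le> Cst \<xi>" by linarith
      moreover have "(1 / s k) * hk \<xi> T k \<le> (1 / s k) * ph \<xi> T k + (1 / s k) * ((Lam' + 1) * hk \<xi> T k)"
      proof -
        have "(1 / s k) * hk \<xi> T k \<le> (1 / s k) * (ph \<xi> T k + (Lam' + 1) * hk \<xi> T k)"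
          using h1 wp by (intro mult_left_mono) auto
        then show ?thesis by (simp only: distrib_left)
      qed
      ultimately show ?thesis using True by simp
    qed
  qed
  have "(\<Sum>k=1..T. (1 / s k) * hk \<xi> T k) \<le> (\<Sum>k=1..T. (1 / s k) * ph \<xi> T k + (if k < k1 then Cst \<xi> else 0))"
    by (intro sum_mono each)
  also have "\<dots> = (\<Sum>k=1..T. (1 / s k) * ph \<xi> T k) + (\<Sum>k=1..T. (if k < k1 then Cst \<xi> else 0))"
    by (rule sum.distrib)
  also have "(\<Sum>k=1..T. (if k < k1 then Cst \<xi> else 0)) = (\<Sum>k\<in>{1..T}. if k \<in> {..<k1} then Cst \<xi> else 0)"
    by (simp only: lessThan_iff)
  also have "\<dots> = (\<Sum>k\<in>{1..T} \<inter> {..<k1}. Cst \<xi>)"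
    by (rule sum.inter_restrict[symmetric]) simp
  also have "\<dots> \<le> (\<Sum>k\<in>{..<k1}. Cst \<xi>)"
    using Cst_nonneg by (intro sum_mono2) auto
  also have "\<dots> = real k1 * Cst \<xi>" by simp
  finally show ?thesis by simp
qed

theorem det_bound: "\<exists>K\<ge>0. \<forall>\<xi> T. 3 \<le> T \<longrightarrow>
   \<bar>Av m T (\<lambda>c. f (xbar \<xi> c T)) - f xs\<bar> \<le> K * (1 + (norm \<xi>)\<^sup>2) * (ln (real T) powr (2 * g) / real T)"
proof -
  define KR where "KR = (6 * M1\<^sup>2 * KE + Yc + 3) / 2 + \<mu> * A0 / 2"
  define K4 where "K4 = real k1 * ((Lam' + 1) * (\<mu> * real k1 / 2) * (1 + KE + norm xs + Cb))"
  define K where "K = 4 * KR / \<mu> + Lam' * (4 * (KR + K4) / \<mu>)"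
  have KR0: "KR \<ge> 0" unfolding KR_def using KE_nonneg Yc_nonneg mu_pos A0_nonneg by simp
  have K40: "K4 \<ge> 0" unfolding K4_def using KE_nonneg Lam'_nonneg mu_pos Cb_nonneg by (intro mult_nonneg_nonneg) auto
  have K0: "K \<ge> 0" unfolding K_def using KR0 K40 Lam'_nonneg mu_pos by (intro add_nonneg_nonneg mult_nonneg_nonneg divide_nonneg_pos) auto
  have "\<bar>Av m T (\<lambda>c. f (xbar \<xi> c T)) - f xs\<bar> \<le> K * (1 + (norm \<xi>)\<^sup>2) * (ln (real T) powr (2 * g) / real T)"
    if T3: "3 \<le> T" for \<xi> T
  proof -
    define Z where "Z = 1 + (norm \<xi>)\<^sup>2"
    define L2 where "L2 = ln (real T) powr (2 * g)"
    define Lg where "Lg = \<gamma> T"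
    have T1: "T \<ge> 1" using T3 by simp
    have Tp: "real T > 0" using T3 by simp
    have Z1: "Z \<ge> 1" by (simp add: Z_def)
    have lnT: "ln (real T) \<ge> 1"
    proof -
      have "exp 1 \<le> real T" using exp_le T3 by linarith
      then show ?thesis using Tp by (simp add: ln_ge_iff)
    qed
    have Lg1: "Lg \<ge> 1" unfolding Lg_def gamma_def using lnT g by (intro ge_one_powr_ge_zero) auto
    have L2eq: "L2 = Lg\<^sup>2" by (simp add: L2_def Lg_def gamma_sq)
    have LgL2: "Lg \<le> L2" unfolding L2eq using Lg1 by (simp add: power2_eq_square)
    have L21: "L2 \<ge> 1" using Lg1 LgL2 by linarith
    have "1 * 1 \<le> Z * L2" using Z1 L21 by (intro mult_mono) auto
    then have ZL: "1 \<le> Z * L2" by simp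
    have ZL1: "Z \<le> Z * L2" using Z1 L21 by simp
    have ZL2: "L2 \<le> Z * L2" using Z1 L21 by simp
    define R where "R = (\<Sum>k=1..T. nk \<xi> T k / 2 + (1 / s k) * \<gamma> k * \<delta> k * A0)"
    have trm: "nk \<xi> T k / 2 + (1 / s k) * \<gamma> k * \<delta> k * A0 \<le> KR * Z * L2" if k: "k \<in> {1..T}" for k
    proof -
      have k1': "k \<ge> 1" using k by simp
      have g2: "(\<gamma> k)\<^sup>2 \<le> L2" unfolding L2eq Lg_def using gamma_mono[of k T] k gamma_nonneg[of k] by (intro power_mono) auto
      have eb: "ee \<xi> T k \<le> KE * Z" unfolding Z_def using k by (intro ee_bound) auto
      have "nk \<xi> T k \<le> 6 * M1\<^sup>2 * ee \<xi> T k + Yc + 3 * (\<gamma> k)\<^sup>2" by (rule nk_upper)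
      also have "\<dots> \<le> 6 * M1\<^sup>2 * (KE * Z) + Yc + 3 * L2" using eb g2 by (intro add_mono mult_left_mono) auto
      also have "\<dots> \<le> 6 * M1\<^sup>2 * KE * (Z * L2) + Yc * (Z * L2) + 3 * (Z * L2)"
      proof -
        have "6 * M1\<^sup>2 * KE * Z \<le> 6 * M1\<^sup>2 * KE * (Z * L2)" using ZL1 KE_nonneg by (intro mult_left_mono) auto
        moreover have "Yc \<le> Yc * (Z * L2)" using mult_left_mono[of 1 "Z * L2" Yc] ZL Yc_nonneg by simp
        moreover have "3 * L2 \<le> 3 * (Z * L2)" using ZL2 by simp
        ultimately show ?thesis by (simp add: mult.assoc)
      qed
      finally have n1: "nk \<xi> T k / 2 \<le> (6 * M1\<^sup>2 * KE + Yc + 3) / 2 * (Z * L2)" by (simp add: algebra_simps)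
      have "(1 / s k) * \<delta> k \<le> (\<mu> * real k / 2) * (1 / real k)"
        using w_eq[OF k1'] delta_le[OF k1'] delta_pos[OF k1'] mu_pos by (intro mult_mono) auto
      also have "\<dots> = \<mu> / 2" using k1' by simp
      finally have wd: "(1 / s k) * \<delta> k \<le> \<mu> / 2" .
      have "(1 / s k) * \<gamma> k * \<delta> k * A0 = ((1 / s k) * \<delta> k) * (\<gamma> k * A0)" by (simp add: algebra_simps)
      also have "\<dots> \<le> (\<mu> / 2) * (\<gamma> k * A0)"
        using wd gamma_nonneg[of k] A0_nonneg by (intro mult_right_mono) auto
      also have "\<dots> \<le> (\<mu> / 2) * (Lg * A0)"
        using gamma_mono[of k T] k A0_nonneg mu_pos unfolding Lg_def by (intro mult_left_mono mult_right_mono) auto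
      also have "\<dots> \<le> (\<mu> / 2) * ((Z * L2) * A0)"
        using LgL2 ZL2 A0_nonneg mu_pos by (intro mult_left_mono mult_right_mono) auto
      finally have n2: "(1 / s k) * \<gamma> k * \<delta> k * A0 \<le> \<mu> * A0 / 2 * (Z * L2)" by (simp add: algebra_simps)
      have kr: "KR * Z * L2 = (6 * M1\<^sup>2 * KE + Yc + 3) / 2 * (Z * L2) + \<mu> * A0 / 2 * (Z * L2)"
        by (simp add: KR_def algebra_simps)
      show ?thesis using n1 n2 kr by linarith
    qed
    have R_le: "R \<le> real T * KR * Z * L2"
    proof -
      have "R \<le> (\<Sum>k=1..T. KR * Z * L2)" unfolding R_def by (intro sum_mono trm)
      also have "\<dots> = real T * KR * Z * L2" by simp
      finally show ?thesis .
    qed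
    have R0: "R \<ge> 0" unfolding R_def
    proof (intro sum_nonneg add_nonneg_nonneg)
      fix k assume k: "k \<in> {1..T}"
      show "0 \<le> nk \<xi> T k / 2" unfolding nk_def NN_def by (intro divide_nonneg_nonneg Av_nonneg) auto
      show "0 \<le> (1 / s k) * \<gamma> k * \<delta> k * A0"
        using w_pos[of k] k gamma_nonneg[of k] delta_pos[of k] A0_nonneg by (intro mult_nonneg_nonneg) auto
    qed
    have Wl: "W T \<ge> \<mu> * (real T)\<^sup>2 / 4" by (rule W_lower)
    have Wp: "W T > 0" using W_pos[OF T1] .
    have S: "(\<Sum>k=1..T. (1 / s k) * ph \<xi> T k) \<le> R"
    proof -
      have "(\<Sum>k=1..T. (1 / s k) * ph \<xi> T k) \<le> R - \<mu>\<^sup>2 * (real T)\<^sup>2 / 8 * ee \<xi> T (Suc T)"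
        unfolding R_def by (rule main_sum) simp
      moreover have "\<mu>\<^sup>2 * (real T)\<^sup>2 / 8 * ee \<xi> T (Suc T) \<ge> 0" using ee_nonneg by simp
      ultimately show ?thesis by linarith
    qed
    define U where "U = (4 * KR / \<mu>) * Z * (L2 / real T)"
    define V where "V = Lam' * ((4 * (KR + K4) / \<mu>) * Z * (L2 / real T))"
    have U0: "U \<ge> 0" unfolding U_def using KR0 mu_pos Z1 L21 Tp by simp
    have V0: "V \<ge> 0" unfolding V_def using KR0 K40 mu_pos Z1 L21 Tp Lam'_nonneg by simp
    have up: "Av m T (\<lambda>c. f (xbar \<xi> c T)) - f xs \<le> U"
    proof -
      have "Av m T (\<lambda>c. f (xbar \<xi> c T)) - f xs \<le> (\<Sum>k=1..T. (1 / s k) * ph \<xi> T k) / W T" by (rule upper[OF T1])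
      also have "\<dots> \<le> R / W T" using S Wp by (intro divide_right_mono) auto
      also have "\<dots> \<le> U" unfolding U_def using R0 R_le Wl Tp mu_pos by (intro frac_bound) auto
      finally show ?thesis .
    qed
    have lo: "f xs - Av m T (\<lambda>c. f (xbar \<xi> c T)) \<le> V"
    proof -
      have CZ: "Cst \<xi> \<le> (Lam' + 1) * (\<mu> * real k1 / 2) * (1 + KE + norm xs + Cb) * Z"
      proof -
        have e: "(1 + KE + norm xs + Cb) * Z = Z + KE * Z + norm xs * Z + Cb * Z" by (simp add: algebra_simps)
        have "norm xs \<le> norm xs * Z" using mult_left_mono[of 1 Z "norm xs"] Z1 by simp
        moreover have "Cb \<le> Cb * Z" using mult_left_mono[of 1 Z Cb] Z1 Cb_nonneg by simp
        ultimately have "1 + KE * Z + norm xs + Cb \<le> (1 + KE + norm xs + Cb) * Z" unfolding e using Z1 by linarith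
        then show ?thesis unfolding Cst_def Z_def[symmetric] using Lam'_nonneg mu_pos
          by (simp add: mult.assoc mult_left_mono)
      qed
      have X1: "(\<Sum>k=1..T. (1 / s k) * hk \<xi> T k) \<le> R + K4 * Z"
      proof -
        have "real k1 * Cst \<xi> \<le> K4 * Z" using CZ unfolding K4_def by (simp add: mult.assoc mult_left_mono)
        then show ?thesis using sum_hk[OF T1, of \<xi>] S by linarith
      qed
      have X0: "0 \<le> R + K4 * Z" using R0 K40 Z1 by simp
      have X2: "R + K4 * Z \<le> real T * (KR + K4) * Z * L2"
      proof -
        have "K4 * Z \<le> K4 * Z * (real T * L2)"
        proof -
          have "1 * 1 \<le> real T * L2" using T1 L21 by (intro mult_mono) auto
          then have "1 \<le> real T * L2" by simp
          moreover have "0 \<le> K4 * Z" using K40 Z1 by simp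
          ultimately show ?thesis using mult_left_mono[of 1 "real T * L2" "K4 * Z"] by simp
        qed
        then show ?thesis using R_le by (simp add: algebra_simps)
      qed
      have "f xs - Av m T (\<lambda>c. f (xbar \<xi> c T)) \<le> Lam' * (\<Sum>k=1..T. (1 / s k) * hk \<xi> T k) / W T" by (rule lower[OF T1])
      also have "\<dots> = Lam' * ((\<Sum>k=1..T. (1 / s k) * hk \<xi> T k) / W T)" by simp
      also have "\<dots> \<le> Lam' * ((R + K4 * Z) / W T)"
        using X1 Wp Lam'_nonneg by (intro mult_left_mono divide_right_mono) auto
      also have "\<dots> \<le> V" unfolding V_def using X0 X2 Wl Tp mu_pos Lam'_nonneg
        by (intro mult_left_mono frac_bound) auto
      finally show ?thesis .
    qed
    have "\<bar>Av m T (\<lambda>c. f (xbar \<xi> c T)) - f xs\<bar> \<le> U + V" using up lo U0 V0 by linarith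
    also have "U + V = K * Z * (L2 / real T)" by (simp add: U_def V_def K_def algebra_simps)
    finally show ?thesis by (simp add: Z_def L2_def)
  qed
  then show ?thesis using K0 by blast
qed

end

lemma indep_int:
  fixes M :: "'w measure" and X1 :: "'w \<Rightarrow> 'a::euclidean_space" and \<phi> :: "'a \<Rightarrow> real"
  assumes P: "prob_space M" and X1: "X1 \<in> borel_measurable M" and E: "E \<in> sets M"
    and h: "\<And>A. A \<in> sets borel \<Longrightarrow> measure M ({\<omega>\<in>space M. X1 \<omega> \<in> A} \<inter> E) = measure M {\<omega>\<in>space M. X1 \<omega> \<in> A} * measure M E"
    and \<phi>: "\<phi> \<in> borel_measurable borel"
  shows "(\<integral>\<omega>. \<phi> (X1 \<omega>) * indicator E \<omega> \<partial>M) = measure M E * (\<integral>\<omega>. \<phi> (X1 \<omega>) \<partial>M)"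
proof -
  interpret prob_space M by (rule P)
  define p where "p = measure M E"
  have p0: "p \<ge> 0" by (simp add: p_def)
  define D where "D = density M (\<lambda>\<omega>. ennreal (indicator E \<omega>))"
  have D: "D = density M (indicator E)" unfolding D_def by (simp add: ennreal_indicator)
  have eqm: "distr D borel X1 = density (distr M borel X1) (\<lambda>_. ennreal p)"
  proof (rule measure_eqI)
    show "sets (distr D borel X1) = sets (density (distr M borel X1) (\<lambda>_. ennreal p))" by simp
    fix A assume "A \<in> sets (distr D borel X1)"
    then have A: "A \<in> sets borel" by simp
    have pre: "X1 -` A \<inter> space M \<in> sets M" using X1 A by (rule measurable_sets)
    have seq: "{\<omega>\<in>space M. X1 \<omega> \<in> A} = X1 -` A \<inter> space M" by auto
    have X1D: "X1 \<in> measurable D borel" using X1 by (simp add: D_def)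
    have "emeasure (distr D borel X1) A = emeasure D (X1 -` A \<inter> space D)"
      by (rule emeasure_distr[OF X1D A])
    also have "\<dots> = emeasure M (E \<inter> (X1 -` A \<inter> space M))"
      unfolding D by (simp add: emeasure_restricted[OF E pre])
    also have "\<dots> = ennreal (measure M ({\<omega>\<in>space M. X1 \<omega> \<in> A} \<inter> E))"
      by (simp add: emeasure_eq_measure seq Int_commute)
    also have "\<dots> = ennreal (measure M {\<omega>\<in>space M. X1 \<omega> \<in> A} * p)" using h[OF A] by (simp add: p_def)
    finally have L: "emeasure (distr D borel X1) A = ennreal (measure M {\<omega>\<in>space M. X1 \<omega> \<in> A} * p)" .
    have "emeasure (density (distr M borel X1) (\<lambda>_. ennreal p)) A = ennreal p * emeasure (distr M borel X1) A"
      by (rule emeasure_density_const) (simp add: A)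
    also have "emeasure (distr M borel X1) A = emeasure M (X1 -` A \<inter> space M)" by (rule emeasure_distr[OF X1 A])
    also have "\<dots> = ennreal (measure M {\<omega>\<in>space M. X1 \<omega> \<in> A})" by (simp add: emeasure_eq_measure seq)
    finally have R: "emeasure (density (distr M borel X1) (\<lambda>_. ennreal p)) A = ennreal (measure M {\<omega>\<in>space M. X1 \<omega> \<in> A} * p)"
      using p0 by (simp add: ennreal_mult'' mult.commute)
    show "emeasure (distr D borel X1) A = emeasure (density (distr M borel X1) (\<lambda>_. ennreal p)) A"
      using L R by simp
  qed
  have "(\<integral>\<omega>. \<phi> (X1 \<omega>) * indicator E \<omega> \<partial>M) = (\<integral>\<omega>. indicator E \<omega> *\<^sub>R \<phi> (X1 \<omega>) \<partial>M)"
    by (simp add: mult.commute)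
  also have "\<dots> = integral\<^sup>L D (\<lambda>\<omega>. \<phi> (X1 \<omega>))"
    unfolding D_def by (rule integral_density[symmetric]) (use X1 \<phi> E in auto)
  also have "\<dots> = integral\<^sup>L (distr D borel X1) \<phi>"
    by (rule integral_distr[symmetric]) (use X1 \<phi> in \<open>simp_all add: D_def\<close>)
  also have "\<dots> = integral\<^sup>L (density (distr M borel X1) (\<lambda>_. ennreal p)) \<phi>" by (simp only: eqm)
  also have "\<dots> = (\<integral>y. p *\<^sub>R \<phi> y \<partial>(distr M borel X1))"
    by (rule integral_density) (use \<phi> p0 in auto)
  also have "\<dots> = p * integral\<^sup>L (distr M borel X1) \<phi>" by simp
  also have "integral\<^sup>L (distr M borel X1) \<phi> = (\<integral>\<omega>. \<phi> (X1 \<omega>) \<partial>M)" by (rule integral_distr[OF X1 \<phi>])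
  finally show ?thesis by (simp add: p_def)
qed

lemma decomp:
  fixes M :: "'w measure" and X1 :: "'w \<Rightarrow> 'a::euclidean_space" and I :: "nat \<Rightarrow> 'w \<Rightarrow> nat"
    and \<Psi> :: "(nat \<Rightarrow> nat) \<Rightarrow> 'a \<Rightarrow> real"
  assumes P: "prob_space M" and m: "m \<ge> 1" and X1: "X1 \<in> borel_measurable M"
    and Im: "\<And>k. I k \<in> measurable M (count_space UNIV)"
    and Iu: "\<And>k j. j < m \<Longrightarrow> measure M {\<omega> \<in> space M. I k \<omega> = j} = 1 / real m"
    and indep: "\<And>A n c. A \<in> sets borel \<Longrightarrow>
      measure M {\<omega> \<in> space M. X1 \<omega> \<in> A \<and> (\<forall>l\<in>{1..n}. I l \<omega> = c l)}
      = measure M {\<omega> \<in> space M. X1 \<omega> \<in> A} * (\<Prod>l\<in>{1..n}. measure M {\<omega> \<in> space M. I l \<omega> = c l})"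
    and \<Psi>m: "\<And>c. \<Psi> c \<in> borel_measurable borel"
    and \<Psi>i: "\<And>c. integrable M (\<lambda>\<omega>. \<Psi> c (X1 \<omega>))"
    and \<Psi>d: "\<And>c c' \<xi>. (\<And>l. l \<in> {1..T} \<Longrightarrow> c l = c' l) \<Longrightarrow> \<Psi> c \<xi> = \<Psi> c' \<xi>"
    and \<Psi>cm: "(\<lambda>\<omega>. \<Psi> (\<lambda>l. I l \<omega>) (X1 \<omega>)) \<in> borel_measurable M"
  shows "(\<integral>\<omega>. \<Psi> (\<lambda>l. I l \<omega>) (X1 \<omega>) \<partial>M) = (\<integral>\<omega>. Av m T (\<lambda>c. \<Psi> c (X1 \<omega>)) \<partial>M)"
proof -
  interpret prob_space M by (rule P)
  define E where "E c = {\<omega> \<in> space M. \<forall>l\<in>{1..T}. I l \<omega> = c l}" for c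
  have Il: "{\<omega> \<in> space M. I l \<omega> = j} \<in> sets M" for l j
  proof -
    have "{\<omega> \<in> space M. I l \<omega> = j} = I l -` {j} \<inter> space M" by auto
    also have "\<dots> \<in> sets M" using Im[of l] by (rule measurable_sets) simp
    finally show ?thesis .
  qed
  have Em: "E c \<in> sets M" for c
    unfolding E_def by (rule sets.sets_Collect_finite_All) (auto intro: Il)
  have UNIVs: "{\<omega> \<in> space M. X1 \<omega> \<in> UNIV} = space M" by auto
  have PE: "measure M (E c) = (\<Prod>l\<in>{1..T}. measure M {\<omega> \<in> space M. I l \<omega> = c l})" for c
    using indep[of UNIV T c] by (simp add: UNIVs E_def prob_space)
  have PE': "measure M (E c) = (1 / real m) ^ T" if "c \<in> CS m T" for c
  proof -
    have "measure M (E c) = (\<Prod>l\<in>{1..T}. 1 / real m)" unfolding PE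
      by (intro prod.cong refl Iu) (use CS_mem[OF that] in auto)
    then show ?thesis by simp
  qed
  have hE: "measure M ({\<omega>\<in>space M. X1 \<omega> \<in> A} \<inter> E c) = measure M {\<omega>\<in>space M. X1 \<omega> \<in> A} * measure M (E c)"
    if A: "A \<in> sets borel" for A c
  proof -
    have "{\<omega>\<in>space M. X1 \<omega> \<in> A} \<inter> E c = {\<omega> \<in> space M. X1 \<omega> \<in> A \<and> (\<forall>l\<in>{1..T}. I l \<omega> = c l)}"
      by (auto simp: E_def)
    then show ?thesis using indep[OF A, of T c] PE[of c] by simp
  qed
  have AEl: "AE \<omega> in M. I l \<omega> < m" for l
  proof -
    have U: "{\<omega> \<in> space M. I l \<omega> < m} = (\<Union>j\<in>{..<m}. {\<omega> \<in> space M. I l \<omega> = j})" by auto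
    have "prob {\<omega> \<in> space M. I l \<omega> < m} = (\<Sum>j\<in>{..<m}. prob {\<omega> \<in> space M. I l \<omega> = j})"
      unfolding U by (rule measure_finite_Union) (auto simp: Il disjoint_family_on_def emeasure_eq_measure)
    also have "\<dots> = 1" using m by (simp add: Iu)
    finally have "prob {\<omega> \<in> space M. I l \<omega> < m} = 1" .
    from AE_prob_1[OF this] show ?thesis by eventually_elim auto
  qed
  have AEm: "AE \<omega> in M. \<forall>l\<in>{1..T}. I l \<omega> < m"
    by (rule AE_finite_allI) (auto intro: AEl)
  have pw: "AE \<omega> in M. \<Psi> (\<lambda>l. I l \<omega>) (X1 \<omega>) = (\<Sum>c\<in>CS m T. \<Psi> c (X1 \<omega>) * indicator (E c) \<omega>)"
    using AEm AE_space
  proof eventually_elim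
    case (elim \<omega>)
    define c0 where "c0 = restrict (\<lambda>l. I l \<omega>) {1..T}"
    have c0: "c0 \<in> CS m T" using elim by (auto simp: CS_def c0_def)
    have iff: "\<omega> \<in> E c \<longleftrightarrow> c = c0" if c: "c \<in> CS m T" for c
    proof
      assume "\<omega> \<in> E c"
      then show "c = c0" using c c0 unfolding CS_def E_def
        by (intro PiE_ext[of c "{1..T}" "\<lambda>_. {..<m}" c0]) (auto simp: c0_def)
    next
      assume "c = c0"
      then show "\<omega> \<in> E c" using elim by (auto simp: E_def c0_def)
    qed
    have "(\<Sum>c\<in>CS m T. \<Psi> c (X1 \<omega>) * indicator (E c) \<omega>) = (\<Sum>c\<in>CS m T. if c = c0 then \<Psi> c (X1 \<omega>) else 0)"
      by (intro sum.cong refl) (auto simp: iff indicator_def)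
    also have "\<dots> = \<Psi> c0 (X1 \<omega>)" using c0 finite_CS by (simp add: sum.delta')
    also have "\<dots> = \<Psi> (\<lambda>l. I l \<omega>) (X1 \<omega>)" by (rule \<Psi>d) (simp add: c0_def)
    finally show ?case by simp
  qed
  have Psim2: "(\<lambda>\<omega>. \<Psi> c (X1 \<omega>)) \<in> borel_measurable M" for c
    using measurable_compose[OF X1 \<Psi>m] by simp
  have "(\<integral>\<omega>. \<Psi> (\<lambda>l. I l \<omega>) (X1 \<omega>) \<partial>M) = (\<integral>\<omega>. (\<Sum>c\<in>CS m T. \<Psi> c (X1 \<omega>) * indicator (E c) \<omega>) \<partial>M)"
    by (rule integral_cong_AE[OF \<Psi>cm _ pw])
      (intro borel_measurable_sum borel_measurable_times Psim2 borel_measurable_indicator Em)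
  also have "\<dots> = (\<Sum>c\<in>CS m T. (\<integral>\<omega>. \<Psi> c (X1 \<omega>) * indicator (E c) \<omega> \<partial>M))"
    by (subst Bochner_Integration.integral_sum) (auto intro!: integrable_real_mult_indicator Em \<Psi>i)
  also have "\<dots> = (\<Sum>c\<in>CS m T. (1 / real m) ^ T * (\<integral>\<omega>. \<Psi> c (X1 \<omega>) \<partial>M))"
  proof (intro sum.cong refl)
    fix c assume c: "c \<in> CS m T"
    show "(\<integral>\<omega>. \<Psi> c (X1 \<omega>) * indicator (E c) \<omega> \<partial>M) = (1 / real m) ^ T * (\<integral>\<omega>. \<Psi> c (X1 \<omega>) \<partial>M)"
      using indep_int[OF P X1 Em hE \<Psi>m] PE'[OF c] by simp
  qed
  also have "\<dots> = (\<Sum>c\<in>CS m T. (\<integral>\<omega>. \<Psi> c (X1 \<omega>) \<partial>M)) / real m ^ T"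
    by (simp add: sum_divide_distrib power_one_over)
  also have "\<dots> = (\<integral>\<omega>. (\<Sum>c\<in>CS m T. \<Psi> c (X1 \<omega>)) \<partial>M) / real m ^ T"
    by (subst Bochner_Integration.integral_sum) (auto intro: \<Psi>i)
  also have "\<dots> = (\<integral>\<omega>. Av m T (\<lambda>c. \<Psi> c (X1 \<omega>)) \<partial>M)"
    by (simp add: Av_def)
  finally show ?thesis .
qed

lemma pdelta'_meas: "pdelta' \<delta> \<in> borel_measurable borel"
  unfolding pdelta'_def by measurable

lemma hg_meas: "(\<lambda>x. hdelta_grad \<delta> x a b) \<in> borel_measurable borel"
proof -
  have c: "(\<lambda>x::'a. inner a x - b) \<in> borel_measurable borel"
    by (intro borel_measurable_continuous_onI continuous_intros)
  have "(\<lambda>x. pdelta' \<delta> (inner a x - b)) \<in> borel_measurable borel"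
    using measurable_compose[OF c pdelta'_meas] by simp
  then show ?thesis unfolding hdelta_grad_def
    by (intro borel_measurable_scaleR borel_measurable_divide borel_measurable_const) auto
qed

context pen begin

lemma step_meas: "sg \<in> borel_measurable borel \<Longrightarrow> (\<lambda>x. step k x j) \<in> borel_measurable borel"
  unfolding step_def
  by (intro borel_measurable_diff borel_measurable_scaleR borel_measurable_add borel_measurable_const
      hg_meas measurable_ident_sets) auto

lemma Xs_meas: "sg \<in> borel_measurable borel \<Longrightarrow> (\<lambda>\<xi>. Xs \<xi> c k) \<in> borel_measurable borel"
proof (induction k)
  case 0 then show ?case by simp
next
  case (Suc k)
  show ?case
  proof (cases "k = 0")
    case True then show ?thesis by simp
  next
    case False
    have "(\<lambda>\<xi>. step k (Xs \<xi> c k) (c k)) \<in> borel_measurable borel"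
      using measurable_compose[OF Suc.IH[OF Suc.prems] step_meas[OF Suc.prems]] by simp
    then show ?thesis using False by simp
  qed
qed

lemma xbar_meas: "sg \<in> borel_measurable borel \<Longrightarrow> (\<lambda>\<xi>. f (xbar \<xi> c t)) \<in> borel_measurable borel"
proof -
  assume sgm: "sg \<in> borel_measurable borel"
  have "(\<lambda>\<xi>. xbar \<xi> c t) \<in> borel_measurable borel"
    unfolding xbar_def using Xs_meas[OF sgm]
    by (intro borel_measurable_scaleR borel_measurable_sum borel_measurable_const) auto
  then show ?thesis by (rule measurable_compose[OF _ f_meas])
qed

lemma xbar_growth: "\<exists>A B. \<forall>\<xi> c. norm (xbar \<xi> c t) \<le> A * norm \<xi> + B"
proof -
  have "\<forall>k. \<exists>\<alpha> \<beta>. \<forall>\<xi> c. norm (Xs \<xi> c k) \<le> \<alpha> * norm \<xi> + \<beta>" using Xs_growth by blast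
  then obtain \<alpha> \<beta> where ab: "\<And>k \<xi> c. norm (Xs \<xi> c k) \<le> \<alpha> k * norm \<xi> + \<beta> k" by metis
  define q where "q = \<bar>1 / W t\<bar>"
  have "norm (xbar \<xi> c t) \<le> (q * (\<Sum>k=1..t. \<bar>1 / s k\<bar> * \<alpha> k)) * norm \<xi> + q * (\<Sum>k=1..t. \<bar>1 / s k\<bar> * \<beta> k)" for \<xi> c
  proof -
    have "norm (xbar \<xi> c t) = q * norm (\<Sum>k=1..t. (1 / s k) *\<^sub>R Xs \<xi> c k)" by (simp add: xbar_def q_def)
    also have "\<dots> \<le> q * (\<Sum>k=1..t. \<bar>1 / s k\<bar> * norm (Xs \<xi> c k))"
      using norm_sum[of "\<lambda>k. (1 / s k) *\<^sub>R Xs \<xi> c k" "{1..t}"] by (intro mult_left_mono) (auto simp: q_def)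
    also have "\<dots> \<le> q * (\<Sum>k=1..t. \<bar>1 / s k\<bar> * (\<alpha> k * norm \<xi> + \<beta> k))"
      using ab by (intro mult_left_mono sum_mono) (auto simp: q_def)
    also have "\<dots> = (q * (\<Sum>k=1..t. \<bar>1 / s k\<bar> * \<alpha> k)) * norm \<xi> + q * (\<Sum>k=1..t. \<bar>1 / s k\<bar> * \<beta> k)"
      by (simp add: algebra_simps sum.distrib sum_distrib_left sum_distrib_right)
    finally show ?thesis .
  qed
  then show ?thesis by blast
qed

lemma f_xbar_bound: "\<exists>C. \<forall>\<xi> c. \<bar>f (xbar \<xi> c t)\<bar> \<le> C * (1 + (norm \<xi>)\<^sup>2)"
proof -
  obtain A B where AB: "\<And>\<xi> c. norm (xbar \<xi> c t) \<le> A * norm \<xi> + B" using xbar_growth by blast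
  obtain C0 where C0: "C0 \<ge> 0" "\<And>y. \<bar>f y\<bar> \<le> C0 * (1 + (norm y)\<^sup>2)" using f_abs_bound by blast
  have "\<bar>f (xbar \<xi> c t)\<bar> \<le> (C0 * (1 + 2 * B\<^sup>2 + 2 * A\<^sup>2)) * (1 + (norm \<xi>)\<^sup>2)" for \<xi> c
  proof -
    have "(norm (xbar \<xi> c t))\<^sup>2 \<le> (A * norm \<xi> + B)\<^sup>2" using AB[of \<xi> c] by (intro power_mono) auto
    also have "\<dots> \<le> 2 * (A * norm \<xi>)\<^sup>2 + 2 * B\<^sup>2"
    proof -
      have "0 \<le> (A * norm \<xi> - B)\<^sup>2" by simp
      then show ?thesis by (simp add: power2_eq_square algebra_simps)
    qed
    finally have n2: "(norm (xbar \<xi> c t))\<^sup>2 \<le> 2 * A\<^sup>2 * (norm \<xi>)\<^sup>2 + 2 * B\<^sup>2" by (simp add: power_mult_distrib)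
    have "1 + (norm (xbar \<xi> c t))\<^sup>2 \<le> (1 + 2 * B\<^sup>2 + 2 * A\<^sup>2) * (1 + (norm \<xi>)\<^sup>2)"
    proof -
      have "(1 + 2 * B\<^sup>2 + 2 * A\<^sup>2) * (1 + (norm \<xi>)\<^sup>2) = 1 + 2 * B\<^sup>2 + 2 * A\<^sup>2 + (1 + 2 * B\<^sup>2) * (norm \<xi>)\<^sup>2 + 2 * A\<^sup>2 * (norm \<xi>)\<^sup>2"
        by (simp add: algebra_simps)
      moreover have "0 \<le> (1 + 2 * B\<^sup>2) * (norm \<xi>)\<^sup>2" "0 \<le> 2 * A\<^sup>2" by simp_all
      ultimately show ?thesis using n2 by linarith
    qed
    then have "C0 * (1 + (norm (xbar \<xi> c t))\<^sup>2) \<le> C0 * ((1 + 2 * B\<^sup>2 + 2 * A\<^sup>2) * (1 + (norm \<xi>)\<^sup>2))"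
      using C0(1) by (rule mult_left_mono)
    then show ?thesis using C0(2)[of "xbar \<xi> c t"] by (simp add: mult.assoc)
  qed
  then show ?thesis by blast
qed

lemma xbar_dep: "(\<And>l. l \<in> {1..t} \<Longrightarrow> c l = c' l) \<Longrightarrow> xbar \<xi> c t = xbar \<xi> c' t"
proof -
  assume h: "\<And>l. l \<in> {1..t} \<Longrightarrow> c l = c' l"
  have "Xs \<xi> c k = Xs \<xi> c' k" if "k \<in> {1..t}" for k
    by (rule Xs_dep) (use h that in auto)
  then have "(\<Sum>k=1..t. (1 / s k) *\<^sub>R Xs \<xi> c k) = (\<Sum>k=1..t. (1 / s k) *\<^sub>R Xs \<xi> c' k)"
    by (intro sum.cong refl) simp
  then show ?thesis unfolding xbar_def by simp
qed

end

theorem proposition19: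
  fixes M :: "'w measure"
    and f :: "'a::euclidean_space \<Rightarrow> real"
    and sg :: "'a \<Rightarrow> 'a"
    and m :: nat and a :: "nat \<Rightarrow> 'a" and b :: "nat \<Rightarrow> real"
    and \<mu> M1 M2 d g :: real
    and s \<gamma> \<delta> :: "nat \<Rightarrow> real"
    and x :: "nat \<Rightarrow> 'w \<Rightarrow> 'a"
    and i :: "nat \<Rightarrow> 'w \<Rightarrow> nat"
  assumes "prob_space M"
    and m2: "m \<ge> 2"
    and a_nz: "\<And>j. j < m \<Longrightarrow> a j \<noteq> 0"
    and X_ne: "\<exists>y. \<forall>j<m. inner (a j) y - b j \<le> 0"
    and mu_pos: "\<mu> > 0"
    and sconv: "strongly_convex_const f \<mu>"
    and M1: "M1 > 0" and M2: "M2 > 0"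
    and growth: "\<And>y v. v \<in> subdifferential f y \<Longrightarrow> norm v \<le> M1 * norm y + M2"
    and sg_sub: "\<And>y. sg y \<in> subdifferential f y"
    and sg_meas: "sg \<in> borel_measurable borel"
    and s_def: "\<And>k. s k = 2 / (\<mu> * real k)"
    and d: "d > 1" and delta_def: "\<And>k. \<delta> k = 1 / real k powr d"
    and g: "g > 0" and gamma_def: "\<And>k. \<gamma> k = ln (real k) powr g"
    and x1_meas: "x 1 \<in> borel_measurable M"
    and x1_sq: "integrable M (\<lambda>\<omega>. (norm (x 1 \<omega>))\<^sup>2)"
    and i_meas: "\<And>k. i k \<in> measurable M (count_space UNIV)"
    and i_unif: "\<And>k j. j < m \<Longrightarrow> measure M {\<omega> \<in> space M. i k \<omega> = j} = 1 / real m"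
    and indep: "\<And>A n c. A \<in> sets borel \<Longrightarrow>
      measure M {\<omega> \<in> space M. x 1 \<omega> \<in> A \<and> (\<forall>l\<in>{1..n}. i l \<omega> = c l)}
      = measure M {\<omega> \<in> space M. x 1 \<omega> \<in> A}
        * (\<Prod>l\<in>{1..n}. measure M {\<omega> \<in> space M. i l \<omega> = c l})"
    and iter: "\<And>k \<omega>. k \<ge> 1 \<Longrightarrow>
      x (Suc k) \<omega> = x k \<omega> - s k *\<^sub>R (sg (x k \<omega>)
         + \<gamma> k *\<^sub>R hdelta_grad (\<delta> k) (x k \<omega>) (a (i k \<omega>)) (b (i k \<omega>)))"
  shows "(\<lambda>t. \<bar>prob_space.expectation M
              (\<lambda>\<omega>. f ((1 / (\<Sum>k=1..t. 1 / s k)) *\<^sub>R (\<Sum>k=1..t. (1 / s k) *\<^sub>R x k \<omega>)))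
            - Inf {f y | y. \<forall>j<m. inner (a j) y - b j \<le> 0}\<bar>)
         \<in> O(\<lambda>t. ln (real t) powr (2 * g) / real t)"
proof -
  have PM: "prob_space M" by fact
  interpret P: pen f sg m a b \<mu> M1 M2 d g s \<gamma> \<delta>
  proof unfold_locales
    show "1 \<le> m" using m2 by simp
  qed (fact a_nz X_ne mu_pos sconv M1 M2 growth sg_sub s_def d delta_def g gamma_def)+
  interpret prob_space M by (rule PM)
  have xk: "x k \<omega> = P.Xs (x 1 \<omega>) (\<lambda>l. i l \<omega>) k" if "k \<ge> 1" for k \<omega>
    using that
  proof (induction k)
    case 0 then show ?case by simp
  next
    case (Suc k)
    show ?case
    proof (cases "k = 0")
      case True then show ?thesis by simp
    next
      case False
      then have k1: "k \<ge> 1" by simp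
      have "x (Suc k) \<omega> = P.step k (x k \<omega>) (i k \<omega>)" using iter[OF k1] by (simp add: P.step_def)
      also have "\<dots> = P.step k (P.Xs (x 1 \<omega>) (\<lambda>l. i l \<omega>) k) (i k \<omega>)" using Suc.IH k1 by simp
      also have "\<dots> = P.Xs (x 1 \<omega>) (\<lambda>l. i l \<omega>) (Suc k)" using k1 by (simp add: P.Xs_Suc)
      finally show ?thesis .
    qed
  qed
  have xmeas: "x k \<in> borel_measurable M" if "k \<ge> 1" for k
    using that
  proof (induction k)
    case 0 then show ?case by simp
  next
    case (Suc k)
    show ?case
    proof (cases "k = 0")
      case True then show ?thesis using x1_meas by simp
    next
      case False
      then have k1: "k \<ge> 1" by simp
      have xm: "x k \<in> borel_measurable M" using Suc.IH k1 by simp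
      have "(\<lambda>\<omega>. P.step k (x k \<omega>) (i k \<omega>)) \<in> borel_measurable M"
      proof (rule measurable_compose_countable[where f = "\<lambda>j \<omega>. P.step k (x k \<omega>) j" and g = "i k"])
        fix j :: nat
        show "(\<lambda>\<omega>. P.step k (x k \<omega>) j) \<in> borel_measurable M"
          using measurable_compose[OF xm P.step_meas[OF sg_meas]] by simp
      qed (rule i_meas)
      moreover have "x (Suc k) = (\<lambda>\<omega>. P.step k (x k \<omega>) (i k \<omega>))"
        using iter[OF k1] by (simp add: P.step_def fun_eq_iff)
      ultimately show ?thesis by simp
    qed
  qed
  obtain K where K0: "K \<ge> 0" and Kb: "\<And>\<xi> T. 3 \<le> T \<Longrightarrow>
      \<bar>Av m T (\<lambda>c. f (P.xbar \<xi> c T)) - f P.xs\<bar> \<le> K * (1 + (norm \<xi>)\<^sup>2) * (ln (real T) powr (2 * g) / real T)"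
    using P.det_bound by blast
  define r where "r T = ln (real T) powr (2 * g) / real T" for T :: nat
  define EX2 where "EX2 = expectation (\<lambda>\<omega>. (norm (x 1 \<omega>))\<^sup>2)"
  have EX2: "EX2 \<ge> 0" unfolding EX2_def by (rule integral_nonneg_AE) simp
  have main: "\<bar>expectation (\<lambda>\<omega>. f ((1 / (\<Sum>k=1..t. 1 / s k)) *\<^sub>R (\<Sum>k=1..t. (1 / s k) *\<^sub>R x k \<omega>)))
            - Inf {f y | y. \<forall>j<m. inner (a j) y - b j \<le> 0}\<bar> \<le> K * (1 + EX2) * r t"
    if t3: "3 \<le> t" for t
  proof -
    define \<Psi> where "\<Psi> c \<xi> = f (P.xbar \<xi> c t)" for c \<xi>
    have e1: "f ((1 / (\<Sum>k=1..t. 1 / s k)) *\<^sub>R (\<Sum>k=1..t. (1 / s k) *\<^sub>R x k \<omega>)) = \<Psi> (\<lambda>l. i l \<omega>) (x 1 \<omega>)" for \<omega>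
    proof -
      have "(\<Sum>k=1..t. (1 / s k) *\<^sub>R x k \<omega>) = (\<Sum>k=1..t. (1 / s k) *\<^sub>R P.Xs (x 1 \<omega>) (\<lambda>l. i l \<omega>) k)"
      proof (intro sum.cong refl)
        fix k assume "k \<in> {1..t}"
        then have "x k \<omega> = P.Xs (x 1 \<omega>) (\<lambda>l. i l \<omega>) k" by (intro xk) simp
        then show "(1 / s k) *\<^sub>R x k \<omega> = (1 / s k) *\<^sub>R P.Xs (x 1 \<omega>) (\<lambda>l. i l \<omega>) k" by (rule arg_cong)
      qed
      then show ?thesis by (simp add: \<Psi>_def P.xbar_def P.W_def)
    qed
    have orig_meas: "(\<lambda>\<omega>. f ((1 / (\<Sum>k=1..t. 1 / s k)) *\<^sub>R (\<Sum>k=1..t. (1 / s k) *\<^sub>R x k \<omega>))) \<in> borel_measurable M"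
    proof -
      have "(\<lambda>\<omega>. (1 / (\<Sum>k=1..t. 1 / s k)) *\<^sub>R (\<Sum>k=1..t. (1 / s k) *\<^sub>R x k \<omega>)) \<in> borel_measurable M"
        using xmeas by (intro borel_measurable_scaleR borel_measurable_sum borel_measurable_const) auto
      then show ?thesis by (rule measurable_compose[OF _ P.f_meas])
    qed
    have \<Psi>m: "\<Psi> c \<in> borel_measurable borel" for c
      unfolding \<Psi>_def by (rule P.xbar_meas[OF sg_meas])
    obtain C where C: "\<And>\<xi> c. \<bar>f (P.xbar \<xi> c t)\<bar> \<le> C * (1 + (norm \<xi>)\<^sup>2)" using P.f_xbar_bound by blast
    have int1: "integrable M (\<lambda>\<omega>. 1 + (norm (x 1 \<omega>))\<^sup>2)"
      using x1_sq by (intro Bochner_Integration.integrable_add integrable_const) auto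
    have \<Psi>i: "integrable M (\<lambda>\<omega>. \<Psi> c (x 1 \<omega>))" for c
    proof (rule Bochner_Integration.integrable_bound)
      show "integrable M (\<lambda>\<omega>. C * (1 + (norm (x 1 \<omega>))\<^sup>2))" using int1 by (rule integrable_mult_right)
      show "(\<lambda>\<omega>. \<Psi> c (x 1 \<omega>)) \<in> borel_measurable M" using measurable_compose[OF x1_meas \<Psi>m] by simp
      show "AE \<omega> in M. norm (\<Psi> c (x 1 \<omega>)) \<le> norm (C * (1 + (norm (x 1 \<omega>))\<^sup>2))"
      proof (rule AE_I2)
        fix \<omega>
        have "norm (\<Psi> c (x 1 \<omega>)) \<le> C * (1 + (norm (x 1 \<omega>))\<^sup>2)" using C by (simp add: \<Psi>_def)
        also have "\<dots> \<le> norm (C * (1 + (norm (x 1 \<omega>))\<^sup>2))" by simp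
        finally show "norm (\<Psi> c (x 1 \<omega>)) \<le> norm (C * (1 + (norm (x 1 \<omega>))\<^sup>2))" .
      qed
    qed
    have \<Psi>d: "\<Psi> c \<xi> = \<Psi> c' \<xi>" if "\<And>l. l \<in> {1..t} \<Longrightarrow> c l = c' l" for c c' \<xi>
      unfolding \<Psi>_def using P.xbar_dep[OF that] by simp
    have \<Psi>cm: "(\<lambda>\<omega>. \<Psi> (\<lambda>l. i l \<omega>) (x 1 \<omega>)) \<in> borel_measurable M"
      using orig_meas unfolding e1 .
    have m1: "m \<ge> 1" using m2 by simp
    have dec: "expectation (\<lambda>\<omega>. \<Psi> (\<lambda>l. i l \<omega>) (x 1 \<omega>)) = expectation (\<lambda>\<omega>. Av m t (\<lambda>c. \<Psi> c (x 1 \<omega>)))"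
      by (rule decomp[OF PM m1 x1_meas i_meas i_unif indep \<Psi>m \<Psi>i \<Psi>d \<Psi>cm])
    have intAv: "integrable M (\<lambda>\<omega>. Av m t (\<lambda>c. \<Psi> c (x 1 \<omega>)))"
      unfolding Av_def using \<Psi>i by (intro integrable_divide_zero Bochner_Integration.integrable_sum) auto
    have Inf: "Inf {f y | y. \<forall>j<m. inner (a j) y - b j \<le> 0} = f P.xs" by (rule P.Inf_eq)
    have "\<bar>expectation (\<lambda>\<omega>. Av m t (\<lambda>c. \<Psi> c (x 1 \<omega>))) - f P.xs\<bar>
        = \<bar>expectation (\<lambda>\<omega>. Av m t (\<lambda>c. \<Psi> c (x 1 \<omega>)) - f P.xs)\<bar>"
      using intAv by (simp add: prob_space)
    also have "\<dots> \<le> expectation (\<lambda>\<omega>. \<bar>Av m t (\<lambda>c. \<Psi> c (x 1 \<omega>)) - f P.xs\<bar>)"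
      by (rule integral_abs_bound)
    also have "\<dots> \<le> expectation (\<lambda>\<omega>. (K * r t) * (1 + (norm (x 1 \<omega>))\<^sup>2))"
    proof (rule integral_mono)
      show "integrable M (\<lambda>\<omega>. \<bar>Av m t (\<lambda>c. \<Psi> c (x 1 \<omega>)) - f P.xs\<bar>)"
        using intAv by (intro integrable_abs Bochner_Integration.integrable_diff integrable_const) auto
      show "integrable M (\<lambda>\<omega>. (K * r t) * (1 + (norm (x 1 \<omega>))\<^sup>2))" using int1 by (rule integrable_mult_right)
      fix \<omega>
      show "\<bar>Av m t (\<lambda>c. \<Psi> c (x 1 \<omega>)) - f P.xs\<bar> \<le> (K * r t) * (1 + (norm (x 1 \<omega>))\<^sup>2)"
      proof -
        have "\<bar>Av m t (\<lambda>c. \<Psi> c (x 1 \<omega>)) - f P.xs\<bar> \<le> K * (1 + (norm (x 1 \<omega>))\<^sup>2) * r t"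
          using Kb[OF t3, of "x 1 \<omega>"] unfolding \<Psi>_def r_def .
        also have "K * (1 + (norm (x 1 \<omega>))\<^sup>2) * r t = (K * r t) * (1 + (norm (x 1 \<omega>))\<^sup>2)" by (simp add: ac_simps)
        finally show ?thesis .
      qed
    qed
    also have "\<dots> = (K * r t) * (1 + EX2)"
      using x1_sq by (simp add: EX2_def prob_space)
    finally have B: "\<bar>expectation (\<lambda>\<omega>. Av m t (\<lambda>c. \<Psi> c (x 1 \<omega>))) - f P.xs\<bar> \<le> (K * r t) * (1 + EX2)" .
    show ?thesis unfolding e1 dec Inf using B by (simp add: algebra_simps)
  qed
  show ?thesis
  proof (rule bigoI[where c = "K * (1 + EX2)"])
    show "eventually (\<lambda>t. norm \<bar>prob_space.expectation M
              (\<lambda>\<omega>. f ((1 / (\<Sum>k=1..t. 1 / s k)) *\<^sub>R (\<Sum>k=1..t. (1 / s k) *\<^sub>R x k \<omega>)))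
            - Inf {f y | y. \<forall>j<m. inner (a j) y - b j \<le> 0}\<bar> \<le> K * (1 + EX2) * norm (ln (real t) powr (2 * g) / real t)) at_top"
    proof (rule eventually_at_top_linorderI[of 3])
      fix t :: nat assume t: "3 \<le> t"
      have r0: "r t \<ge> 0" by (simp add: r_def)
      then have "norm (ln (real t) powr (2 * g) / real t) = r t" by (simp add: r_def)
      then show "norm \<bar>prob_space.expectation M
              (\<lambda>\<omega>. f ((1 / (\<Sum>k=1..t. 1 / s k)) *\<^sub>R (\<Sum>k=1..t. (1 / s k) *\<^sub>R x k \<omega>)))
            - Inf {f y | y. \<forall>j<m. inner (a j) y - b j \<le> 0}\<bar> \<le> K * (1 + EX2) * norm (ln (real t) powr (2 * g) / real t)"
        using main[OF t] r0 by simp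
    qed
  qed
qed

end
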